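(* Let $F$ be a connected, compact, simple Lie group and $m\ge 2$. An $F^m$-invariant Riemannian metric on the Ledger--Obata space $F^m/\mathrm{diag}(F)$ is naturally reductive if and only if it is generated by a pair $(\mathfrak{p},(\cdot,\cdot))$ such that one of the following holds: (a) $\mathfrak{p}$ is an ideal of $\mathfrak{g}$ isomorphic to $(m-1)\mathfrak{f}$ (i.e. the direct sum of $m-1$ of the $m$ simple summands $\mathfrak f$ of $\mathfrak g$) and $(\cdot,\cdot)$ is an $\mathrm{ad}(\mathfrak{p})$-invariant inner product on it, so that $(\cdot,\cdot)=\sum_{i}\beta_i\langle\cdot,\cdot\rangle_i$, the sum running over the $m-1$ summands contained in $\mathfrak p$, with all $\beta_i>0$; or (b) there is an $\mathrm{ad}(\mathfrak{g})$-invariant quadratic form $Q=\sum_{i=1}^m\alpha_i\langle\cdot,\cdot\rangle_i$ on $\mathfrak{g}$ with all $\alpha_i\neq 0$, such that $\mathfrak{p}$ is the $Q$-orthogonal complement of $\mathfrak{h}=\mathrm{diag}(\mathfrak f)$ in $\mathfrak{g}$ and $(\cdot,\cdot)=Q|_{\mathfrak p}$, where either (i) $\alpha_i>0$ for all $i=1,\dots,m$, or (ii) there is $j\in\{1,\dots,m\}$ with $\alpha_j<0$, $\alpha_i>0$ for all $i\neq j$, and $S:=\sum_{i=1}^m\alpha_i<0$.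
   Context: $F$ is a connected compact simple Lie group with Lie algebra $\mathfrak f$; $G=F^m$, $H=\mathrm{diag}(F)=\{(x,\dots,x):x\in F\}$, $\mathfrak g=m\mathfrak f=\mathfrak f\oplus\cdots\oplus\mathfrak f$, $\mathfrak h=\mathrm{diag}(\mathfrak f)=\{(X,\dots,X):X\in\mathfrak f\}$. $\langle\cdot,\cdot\rangle$ denotes minus the Killing form of $\mathfrak g$ and $\langle\cdot,\cdot\rangle_i$ its restriction to the $i$-th copy of $\mathfrak f$ (extended by zero on the other summands). An $F^m$-invariant metric on $G/H$ corresponds to an $\mathrm{Ad}(H)$-invariant inner product $(\cdot,\cdot)$ on an $\mathrm{Ad}(H)$-invariant complement $\mathfrak p$ of $\mathfrak h$ in $\mathfrak g$ (identified with the tangent space at $eH$). Such a metric is naturally reductive if the $\mathrm{Ad}(H)$-invariant complement $\mathfrak p$ can be chosen so that $([X,Y]_{\mathfrak p},X)=0$ for all $X,Y\in\mathfrak p$, where $[X,Y]_{\mathfrak p}$ is the $\mathfrak p$-component with respect to $\mathfrak g=\mathfrak h\oplus\mathfrak p$; the metric is then said to be generated by the pair $(\mathfrak p,(\cdot,\cdot))$. *)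

theory Defs
  imports "HOL-Analysis.Analysis"
begin

definition lie_algebra :: "('a::real_vector \<Rightarrow> 'a \<Rightarrow> 'a) \<Rightarrow> bool" where
  "lie_algebra br \<longleftrightarrow> bilinear br \<and> (\<forall>x. br x x = 0) \<and>
     (\<forall>x y z. br x (br y z) + br y (br z x) + br z (br x y) = 0)"

definition lin_trace :: "('a::euclidean_space \<Rightarrow> 'a) \<Rightarrow> real" where
  "lin_trace T = (\<Sum>b\<in>Basis. T b \<bullet> b)"

definition killing :: "('a::euclidean_space \<Rightarrow> 'a \<Rightarrow> 'a) \<Rightarrow> 'a \<Rightarrow> 'a \<Rightarrow> real" where
  "killing br x y = lin_trace (\<lambda>z. br x (br y z))"

definition lie_ideal :: "('a::real_vector \<Rightarrow> 'a \<Rightarrow> 'a) \<Rightarrow> 'a set \<Rightarrow> bool" where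
  "lie_ideal br I \<longleftrightarrow> subspace I \<and> (\<forall>x y. y \<in> I \<longrightarrow> br x y \<in> I)"

definition simple_lie_algebra :: "('a::real_vector \<Rightarrow> 'a \<Rightarrow> 'a) \<Rightarrow> bool" where
  "simple_lie_algebra br \<longleftrightarrow> lie_algebra br \<and> (\<exists>x y. br x y \<noteq> 0) \<and>
     (\<forall>I. lie_ideal br I \<longrightarrow> I = {0} \<or> I = UNIV)"

text \<open>Compact (semisimple) Lie algebra: negative definite Killing form.\<close>
definition compact_lie_algebra :: "('a::euclidean_space \<Rightarrow> 'a \<Rightarrow> 'a) \<Rightarrow> bool" where
  "compact_lie_algebra br \<longleftrightarrow> lie_algebra br \<and> (\<forall>x. x \<noteq> 0 \<longrightarrow> killing br x x < 0)"

definition prod_br :: "('a \<Rightarrow> 'a \<Rightarrow> 'a) \<Rightarrow> 'a^'m \<Rightarrow> 'a^'m \<Rightarrow> 'a^'m" where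
  "prod_br br X Y = (\<chi> i. br (X $ i) (Y $ i))"

definition diag_sub :: "(('a::zero)^'m) set" where
  "diag_sub = {X. \<exists>x. X = (\<chi> i. x)}"

definition comp_part :: "'m \<Rightarrow> ('a::zero)^'m \<Rightarrow> 'a^'m" where
  "comp_part i X = (\<chi> k. if k = i then X $ i else 0)"

definition negkill :: "('a::euclidean_space \<Rightarrow> 'a \<Rightarrow> 'a) \<Rightarrow> 'a^'m::finite \<Rightarrow> 'a^'m \<Rightarrow> real" where
  "negkill br X Y = - killing (prod_br br) X Y"

definition negkill_i :: "('a::euclidean_space \<Rightarrow> 'a \<Rightarrow> 'a) \<Rightarrow> 'm::finite \<Rightarrow> 'a^'m \<Rightarrow> 'a^'m \<Rightarrow> real" where
  "negkill_i br i X Y = negkill br (comp_part i X) (comp_part i Y)"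

text \<open>A G-invariant metric on G/H, viewed as a symmetric bilinear form on g whose
  radical is exactly h, positive definite on g/h and Ad(H)-invariant (equivalently,
  since H is connected, ad(h)-invariant).\<close>
definition inv_metric :: "('a::euclidean_space \<Rightarrow> 'a \<Rightarrow> 'a) \<Rightarrow> ('a^'m::finite \<Rightarrow> 'a^'m \<Rightarrow> real) \<Rightarrow> bool" where
  "inv_metric br M \<longleftrightarrow> bilinear M \<and> (\<forall>X Y. M X Y = M Y X) \<and>
     (\<forall>X\<in>diag_sub. \<forall>Y. M X Y = 0) \<and> (\<forall>X. X \<notin> diag_sub \<longrightarrow> M X X > 0) \<and>
     (\<forall>Z\<in>diag_sub. \<forall>X Y. M (prod_br br Z X) Y + M X (prod_br br Z Y) = 0)"

definition reductive_compl :: "('a::euclidean_space \<Rightarrow> 'a \<Rightarrow> 'a) \<Rightarrow> ('a^'m::finite) set \<Rightarrow> bool" where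
  "reductive_compl br p \<longleftrightarrow> subspace p \<and> p \<inter> diag_sub = {0} \<and>
     (\<forall>X. \<exists>A\<in>p. \<exists>B\<in>diag_sub. X = A + B) \<and>
     (\<forall>Z\<in>diag_sub. \<forall>X\<in>p. prod_br br Z X \<in> p)"

definition pcomp :: "(('a::euclidean_space)^('m::finite)) set \<Rightarrow> 'a^'m \<Rightarrow> 'a^'m" where
  "pcomp p X = (THE A. A \<in> p \<and> X - A \<in> diag_sub)"

text \<open>The metric M is generated by the pair (p, ip): p is an invariant complement of h
  and M corresponds to ip under the identification p = g/h.\<close>
definition generated_by :: "('a::euclidean_space \<Rightarrow> 'a \<Rightarrow> 'a) \<Rightarrow> ('a^'m::finite \<Rightarrow> 'a^'m \<Rightarrow> real)
     \<Rightarrow> ('a^'m) set \<Rightarrow> ('a^'m \<Rightarrow> 'a^'m \<Rightarrow> real) \<Rightarrow> bool" where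
  "generated_by br M p ip \<longleftrightarrow> reductive_compl br p \<and>
     (\<forall>X Y. M X Y = ip (pcomp p X) (pcomp p Y))"

definition naturally_reductive :: "('a::euclidean_space \<Rightarrow> 'a \<Rightarrow> 'a) \<Rightarrow> ('a^'m::finite \<Rightarrow> 'a^'m \<Rightarrow> real) \<Rightarrow> bool" where
  "naturally_reductive br M \<longleftrightarrow> (\<exists>p ip. generated_by br M p ip \<and>
     (\<forall>X\<in>p. \<forall>Y\<in>p. ip (pcomp p (prod_br br X Y)) X = 0))"

end

theory Submission
  imports Defs
begin

lemma lin_trace_diff: "lin_trace (\<lambda>x. f x - g x) = lin_trace f - lin_trace g"
  by (simp add: lin_trace_def inner_diff_left sum_subtractf)

lemma lin_trace_comp:
  fixes S T :: "'a::euclidean_space \<Rightarrow> 'a"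
  assumes "linear S" "linear T"
  shows "lin_trace (\<lambda>x. S (T x)) = lin_trace (\<lambda>x. T (S x))"
proof -
  have e1: "S (T b) \<bullet> b = (\<Sum>c\<in>Basis. (T b \<bullet> c) * (S c \<bullet> b))" for b
  proof -
    have "S (T b) = S (\<Sum>c\<in>Basis. (T b \<bullet> c) *\<^sub>R c)" by (simp add: euclidean_representation)
    also have "\<dots> = (\<Sum>c\<in>Basis. (T b \<bullet> c) *\<^sub>R S c)"
      using assms(1) by (simp add: linear_sum linear_scale)
    finally show ?thesis by (simp add: inner_sum_left)
  qed
  have e2: "T (S b) \<bullet> b = (\<Sum>c\<in>Basis. (S b \<bullet> c) * (T c \<bullet> b))" for b
  proof -
    have "T (S b) = T (\<Sum>c\<in>Basis. (S b \<bullet> c) *\<^sub>R c)" by (simp add: euclidean_representation)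
    also have "\<dots> = (\<Sum>c\<in>Basis. (S b \<bullet> c) *\<^sub>R T c)"
      using assms(2) by (simp add: linear_sum linear_scale)
    finally show ?thesis by (simp add: inner_sum_left)
  qed
  show ?thesis
    unfolding lin_trace_def e1 e2
    by (subst sum.swap) (simp add: mult.commute)
qed

locale lie =
  fixes br :: "'a::euclidean_space \<Rightarrow> 'a \<Rightarrow> 'a"
  assumes la: "lie_algebra br"
begin

lemma bil: "bilinear br" using la by (simp add: lie_algebra_def)
lemma alt: "br x x = 0" using la by (simp add: lie_algebra_def)
lemma jac: "br x (br y z) + br y (br z x) + br z (br x y) = 0" using la by (simp add: lie_algebra_def)

lemma lin_r: "linear (br x)" using bil by (simp add: bilinear_def)
lemma lin_l: "linear (\<lambda>y. br y x)" using bil by (simp add: bilinear_def)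

lemma anti: "br x y = - br y x"
proof -
  have "br (x+y) (x+y) = 0" by (rule alt)
  then have "br x x + br x y + br y x + br y y = 0"
    using bil by (simp add: bilinear_ladd bilinear_radd algebra_simps)
  then show ?thesis by (simp add: alt eq_neg_iff_add_eq_0)
qed

lemma jac2: "br (br x y) u = br x (br y u) - br y (br x u)"
proof -
  have "br (br x y) u = - br u (br x y)" by (rule anti)
  also have "\<dots> = br x (br y u) + br y (br u x)" using jac[of x y u] by (metis add.commute minus_unique)
  also have "br y (br u x) = - br y (br x u)" using anti[of u x] lin_r[of y] by (simp add: linear_neg)
  finally show ?thesis by simp
qed

lemma killing_sym: "killing br x y = killing br y x"
  unfolding killing_def by (rule lin_trace_comp[OF lin_r lin_r])

lemma killing_inv: "killing br (br x y) z = killing br x (br y z)"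
proof -
  have "killing br (br x y) z = lin_trace (\<lambda>w. br x (br y (br z w)) - br y (br x (br z w)))"
    unfolding killing_def jac2 ..
  also have "\<dots> = lin_trace (\<lambda>w. br x (br y (br z w))) - lin_trace (\<lambda>w. br y (br x (br z w)))"
    by (rule lin_trace_diff)
  also have "lin_trace (\<lambda>w. br y (br x (br z w))) = lin_trace (\<lambda>w. br x (br z (br y w)))"
    by (rule lin_trace_comp) (auto intro: lin_r linear_compose[unfolded o_def] simp: o_def)
  also have "lin_trace (\<lambda>w. br x (br y (br z w))) - lin_trace (\<lambda>w. br x (br z (br y w)))
     = lin_trace (\<lambda>w. br x (br y (br z w)) - br x (br z (br y w)))"
    by (rule lin_trace_diff[symmetric])
  also have "\<dots> = killing br x (br y z)"
    unfolding killing_def jac2 using lin_r[of x] by (simp add: linear_diff)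
  finally show ?thesis .
qed

lemma killing_bil: "bilinear (killing br)"
proof -
  have l1: "linear (\<lambda>y. killing br x y)" for x
    unfolding killing_def lin_trace_def
    using lin_r bil
    by (intro linearI) (simp_all add: bilinear_ladd bilinear_radd bilinear_lmul bilinear_rmul
         linear_add linear_scale inner_add_left sum.distrib sum_distrib_left)
  have "linear (\<lambda>x. killing br x y)" for y
    using l1[of y] by (simp add: killing_sym)
  with l1 show ?thesis by (simp add: bilinear_def)
qed

end

context lie begin

lemma br_sum_r: "br x (sum f S) = (\<Sum>i\<in>S. br x (f i))"
  using lin_r[of x] by (simp add: linear_sum)
lemma br_sum_l: "br (sum f S) x = (\<Sum>i\<in>S. br (f i) x)"
  using linear_sum[OF lin_l[of x], of f S] by simp
lemma br_0r[simp]: "br x 0 = 0" using bil by (simp add: bilinear_rzero)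
lemma br_0l[simp]: "br 0 x = 0" using bil by (simp add: bilinear_lzero)
lemma br_scale_r: "br x (c *\<^sub>R y) = c *\<^sub>R br x y" using bil by (simp add: bilinear_rmul)
lemma br_scale_l: "br (c *\<^sub>R x) y = c *\<^sub>R br x y" using bil by (simp add: bilinear_lmul)
lemma br_add_r: "br x (y + z) = br x y + br x z" using bil by (simp add: bilinear_radd)
lemma br_add_l: "br (x + y) z = br x z + br y z" using bil by (simp add: bilinear_ladd)
lemma br_diff_r: "br x (y - z) = br x y - br x z" using bil by (simp add: bilinear_rsub)
lemma br_diff_l: "br (x - y) z = br x z - br y z" using bil by (simp add: bilinear_lsub)
lemma br_neg_r: "br x (- y) = - br x y" using bil by (simp add: bilinear_rneg)
lemma br_neg_l: "br (- x) y = - br x y" using bil by (simp add: bilinear_lneg)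

lemma killing_prod:
  fixes X Y :: "'a^'m::finite"
  shows "killing (prod_br br) X Y = (\<Sum>i\<in>UNIV. killing br (X$i) (Y$i))"
proof -
  have bas: "(Basis :: ('a^'m) set) = (\<lambda>(i,u). axis i u) ` (UNIV \<times> Basis)"
    unfolding Basis_vec_def by auto
  have inj: "inj_on (\<lambda>(i,u). axis i u) (UNIV \<times> (Basis::'a set))"
    by (auto simp: inj_on_def axis_eq_axis nonzero_Basis)
  have pp: "prod_br br X (prod_br br Y (axis i u)) = axis i (br (X$i) (br (Y$i) u))" for i u
    by (simp add: prod_br_def axis_def vec_eq_iff)
  have "killing (prod_br br) X Y = (\<Sum>(i,u)\<in>UNIV \<times> (Basis::'a set). br (X$i) (br (Y$i) u) \<bullet> u)"
    unfolding killing_def lin_trace_def bas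
    by (subst sum.reindex[OF inj]) (simp add: case_prod_beta pp inner_axis_axis)
  also have "\<dots> = (\<Sum>i\<in>UNIV. killing br (X$i) (Y$i))"
    by (simp add: sum.cartesian_product[symmetric] killing_def lin_trace_def)
  finally show ?thesis .
qed

lemma killing_0l[simp]: "killing br 0 y = 0"
  using killing_bil by (simp add: bilinear_lzero)

lemma negkill_i_eq: "negkill_i br i X Y = - killing br (X$i) (Y$i)"
  unfolding negkill_i_def negkill_def killing_prod comp_part_def
  by (simp add: if_distrib cong: if_cong)

end

locale clie = lie +
  assumes negdef: "x \<noteq> 0 \<Longrightarrow> killing br x x < 0"
begin

definition B where "B x y = - killing br x y"

lemma B_bil: "bilinear B"
  unfolding bilinear_def linear_iff B_def using killing_bil
  by (simp add: bilinear_ladd bilinear_radd bilinear_lmul bilinear_rmul)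
lemma B_sym: "B x y = B y x" by (simp add: B_def killing_sym)
lemma B_pos: "x \<noteq> 0 \<Longrightarrow> B x x > 0" using negdef by (simp add: B_def)
lemma B_nonneg: "B x x \<ge> 0" using B_pos[of x] by (cases "x = 0") (auto simp: B_def)
lemma B_inv: "B (br x y) z = B x (br y z)" by (simp add: B_def killing_inv)
lemma B_inv2: "B (br z x) y + B x (br z y) = 0"
  using B_inv[of x z y] B_bil anti[of z x] by (simp add: bilinear_lneg)
lemma B_0l[simp]: "B 0 y = 0" using B_bil by (simp add: bilinear_lzero)
lemma B_0r[simp]: "B y 0 = 0" using B_bil by (simp add: bilinear_rzero)
lemma B_nondeg: "(\<And>y. B x y = 0) \<Longrightarrow> x = 0" using B_pos by force
lemma B_alt3: "B (br x z) x = 0"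
  by (metis B_inv B_0r B_sym alt anti B_inv2 add.right_neutral)

lemma negkill_i_B: "negkill_i br i X Y = B (X$i) (Y$i)"
  by (simp add: negkill_i_eq B_def)

end

locale slie = clie +
  assumes simple: "simple_lie_algebra br"
begin

lemma ideal_triv: "lie_ideal br I \<Longrightarrow> I = {0} \<or> I = UNIV"
  using simple by (simp add: simple_lie_algebra_def)

lemma nonab: "\<exists>x y. br x y \<noteq> 0"
  using simple by (simp add: simple_lie_algebra_def)

definition brs where "brs = {br x y | x y. True}"

lemma perfect: "span brs = UNIV"
proof -
  have id: "lie_ideal br (span brs)"
    unfolding lie_ideal_def
  proof (intro conjI allI impI)
    show "subspace (span brs)" by simp
    fix x y assume "y \<in> span brs"
    then show "br x y \<in> span brs"
    proof (induct rule: span_induct)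
      case base
      show ?case unfolding subspace_def
        by (simp add: br_add_r br_scale_r span_add span_scale span_zero)
    next
      case (step y)
      then obtain a b where "y = br a b" by (auto simp: brs_def)
      then have "br x y \<in> brs" by (auto simp: brs_def)
      then show ?case by (rule span_base)
    qed
  qed
  obtain x y where "br x y \<noteq> 0" using nonab by blast
  moreover have "br x y \<in> span brs" by (rule span_base) (auto simp: brs_def)
  ultimately have "span brs \<noteq> {0}" by blast
  with ideal_triv[OF id] show ?thesis by blast
qed

lemma vanish_on_brs:
  fixes n :: "'a \<Rightarrow> 'a \<Rightarrow> real"
  assumes "bilinear n" and "\<And>x y z. n (br x y) z = 0"
  shows "n w z = 0"
proof -
  have "w \<in> span brs" using perfect by simp
  then show ?thesis
  proof (induct rule: span_induct)
    case base
    show ?case unfolding subspace_def using assms(1)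
      by (simp add: bilinear_ladd bilinear_lmul bilinear_lzero)
  next
    case (step y)
    then obtain a b where "y = br a b" by (auto simp: brs_def)
    then show ?case using assms(2) by simp
  qed
qed

lemma schur_anti:
  fixes n :: "'a \<Rightarrow> 'a \<Rightarrow> real"
  assumes bn: "bilinear n" and an: "\<And>x y. n x y = - n y x"
    and inv: "\<And>z x y. n (br z x) y + n x (br z y) = 0"
  shows "n x y = 0"
proof -
  define phi where "phi x y z = n (br x y) z" for x y z
  have p1: "phi x y z = - phi y x z" for x y z
    unfolding phi_def using anti[of x y] bn by (simp add: bilinear_lneg)
  have p2: "phi x y z = phi x z y" for x y z
    unfolding phi_def using inv[of x y z] an[of y "br x z"] by (simp add: eq_neg_iff_add_eq_0)
  have "phi x y z = 0" for x y z
  proof -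
    have "phi x y z = phi x z y" by (rule p2)
    also have "\<dots> = - phi z x y" by (rule p1)
    also have "\<dots> = - phi z y x" by (simp add: p2[of z x y])
    also have "\<dots> = phi y z x" by (simp add: p1[of y z x])
    also have "\<dots> = phi y x z" by (rule p2)
    also have "\<dots> = - phi x y z" by (rule p1)
    finally show ?thesis by simp
  qed
  then show ?thesis using vanish_on_brs[OF bn] unfolding phi_def by blast
qed

lemma psd_radical:
  fixes n :: "'a \<Rightarrow> 'a \<Rightarrow> real"
  assumes bn: "bilinear n" and psd: "\<And>x. n x x \<ge> 0" and sym: "\<And>x y. n x y = n y x"
    and z: "n x0 x0 = 0"
  shows "n x0 y = 0"
proof (rule ccontr)
  assume a: "n x0 y \<noteq> 0"
  have b0: "n y y \<ge> 0" using psd by simp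
  define d where "d = n y y + 1"
  define t where "t = - n x0 y / d"
  have d0: "d > 0" using b0 by (simp add: d_def)
  have dt: "d * t = - n x0 y" using d0 by (simp add: t_def)
  have q0: "n (x0 + t *\<^sub>R y) (x0 + t *\<^sub>R y) = n x0 x0 + t * n x0 y + t * n y x0 + t * (t * n y y)"
    using bn by (simp add: bilinear_ladd bilinear_radd bilinear_lmul bilinear_rmul)
  have q: "n (x0 + t *\<^sub>R y) (x0 + t *\<^sub>R y) = 2 * t * n x0 y + t * t * n y y"
    unfolding q0 z sym[of y x0] by simp
  have e: "(d * d) * (2 * t * n x0 y + t * t * n y y) = 2 * (d * t) * n x0 y * d + (d * t) * (d * t) * n y y"
    by (simp add: algebra_simps)
  have "2 * (d * t) * n x0 y * d + (d * t) * (d * t) * n y y = - (n x0 y * n x0 y) * (n y y + 2)"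
    unfolding dt by (simp add: d_def algebra_simps)
  also have "\<dots> < 0" using a b0 by (auto intro!: mult_pos_pos simp: zero_less_mult_iff)
  finally have "(d * d) * (2 * t * n x0 y + t * t * n y y) < 0" using e by simp
  moreover have "d * d > 0" using d0 by simp
  ultimately have "2 * t * n x0 y + t * t * n y y < 0"
    by (auto simp: mult_less_0_iff)
  then show False using psd[of "x0 + t *\<^sub>R y"] q by simp
qed

lemma schur_sym:
  fixes n :: "'a \<Rightarrow> 'a \<Rightarrow> real"
  assumes bn: "bilinear n" and sym: "\<And>x y. n x y = n y x"
    and inv: "\<And>z x y. n (br z x) y + n x (br z y) = 0"
  shows "\<exists>c. \<forall>x y. n x y = c * B x y"
proof -
  let ?S = "sphere (0::'a) 1"
  let ?h = "\<lambda>x. n x x / B x x"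
  have cn: "continuous_on ?S (\<lambda>x. n x x)"
    using bounded_bilinear.continuous_on[OF iffD1[OF bilinear_conv_bounded_bilinear bn], of ?S id id]
    by (simp add: continuous_on_id)
  have cB: "continuous_on ?S (\<lambda>x. B x x)"
    using bounded_bilinear.continuous_on[OF iffD1[OF bilinear_conv_bounded_bilinear B_bil], of ?S id id]
    by (simp add: continuous_on_id)
  have "continuous_on ?S ?h"
    by (rule continuous_on_divide[OF cn cB]) (auto intro!: B_pos[THEN less_imp_neq, THEN not_sym])
  moreover have "?S \<noteq> {}"
  proof -
    obtain b :: 'a where "b \<in> Basis" using nonempty_Basis by blast
    then have "b \<in> ?S" by simp
    then show ?thesis by blast
  qed
  ultimately obtain x0 where x0: "x0 \<in> ?S" and mx: "\<And>y. y \<in> ?S \<Longrightarrow> ?h y \<le> ?h x0"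
    using continuous_attains_sup[OF compact_sphere] by blast
  define c where "c = ?h x0"
  have x00: "x0 \<noteq> 0" using x0 by auto
  have le: "n y y \<le> c * B y y" for y
  proof (cases "y = 0")
    case True then show ?thesis using bn by (simp add: bilinear_lzero)
  next
    case False
    define u where "u = (1 / norm y) *\<^sub>R y"
    have u: "u \<in> ?S" using False by (simp add: u_def)
    have u0: "u \<noteq> 0" using False by (simp add: u_def)
    have "?h u \<le> c" using mx[OF u] by (simp add: c_def)
    then have hu: "n u u \<le> c * B u u" using B_pos[OF u0] by (simp add: divide_le_eq)
    have "n u u = (1/norm y)^2 * n y y" "B u u = (1/norm y)^2 * B y y"
      using bn B_bil by (simp_all add: u_def bilinear_lmul bilinear_rmul power2_eq_square)
    then have "(1/norm y)^2 * n y y \<le> (1/norm y)^2 * (c * B y y)" using hu by (simp add: algebra_simps)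
    then show ?thesis using False by (simp add: mult_le_cancel_left_pos)
  qed
  define m' where "m' x y = c * B x y - n x y" for x y
  have bm: "bilinear m'"
    unfolding bilinear_def linear_iff m'_def using bn B_bil
    by (simp add: bilinear_ladd bilinear_radd bilinear_lmul bilinear_rmul algebra_simps)
  have psd: "m' x x \<ge> 0" for x using le[of x] by (simp add: m'_def)
  have sm: "m' x y = m' y x" for x y by (simp add: m'_def sym B_sym)
  have z: "m' x0 x0 = 0" using B_pos[OF x00] by (simp add: m'_def c_def)
  have id: "lie_ideal br {x. \<forall>y. m' x y = 0}"
    unfolding lie_ideal_def
  proof (intro conjI allI impI)
    show "subspace {x. \<forall>y. m' x y = 0}" unfolding subspace_def using bm
      by (simp add: bilinear_ladd bilinear_lmul bilinear_lzero)
    fix x y assume "y \<in> {x. \<forall>y. m' x y = 0}"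
    moreover have "m' (br x y) w + m' y (br x w) = 0" for w
    proof -
      have "m' (br x y) w + m' y (br x w) = c * (B (br x y) w + B y (br x w)) - (n (br x y) w + n y (br x w))"
        by (simp add: m'_def algebra_simps)
      then show ?thesis using inv[of x y w] B_inv2[of x y w] by simp
    qed
    ultimately show "br x y \<in> {x. \<forall>y. m' x y = 0}" by auto
  qed
  have "x0 \<in> {x. \<forall>y. m' x y = 0}" using psd_radical[OF bm psd sm z] by blast
  then have "{x. \<forall>y. m' x y = 0} = UNIV" using ideal_triv[OF id] x00 by blast
  then have all: "\<forall>x y. m' x y = 0" by (simp add: set_eq_iff)
  have "n x y = c * B x y" for x y
  proof -
    have "c * B x y - n x y = 0" using all unfolding m'_def by blast
    then show ?thesis by simp
  qed
  then show ?thesis by blast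
qed

lemma schur:
  fixes n :: "'a \<Rightarrow> 'a \<Rightarrow> real"
  assumes bn: "bilinear n"
    and inv: "\<And>z x y. n (br z x) y + n x (br z y) = 0"
  shows "\<exists>c. \<forall>x y. n x y = c * B x y"
proof -
  define s where "s x y = n x y + n y x" for x y
  define a where "a x y = n x y - n y x" for x y
  have bs: "bilinear s" unfolding bilinear_def linear_iff s_def using bn
    by (simp add: bilinear_ladd bilinear_radd bilinear_lmul bilinear_rmul algebra_simps)
  have ba: "bilinear a" unfolding bilinear_def linear_iff a_def using bn
    by (simp add: bilinear_ladd bilinear_radd bilinear_lmul bilinear_rmul algebra_simps)
  have invs: "s (br z x) y + s x (br z y) = 0" for z x y
  proof -
    have "s (br z x) y + s x (br z y) = (n (br z x) y + n x (br z y)) + (n (br z y) x + n y (br z x))"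
      by (simp add: s_def algebra_simps)
    then show ?thesis using inv[of z x y] inv[of z y x] by simp
  qed
  have inva: "a (br z x) y + a x (br z y) = 0" for z x y
  proof -
    have "a (br z x) y + a x (br z y) = (n (br z x) y + n x (br z y)) - (n (br z y) x + n y (br z x))"
      by (simp add: a_def algebra_simps)
    then show ?thesis using inv[of z x y] inv[of z y x] by simp
  qed
  have a0: "a x y = 0" for x y
    by (rule schur_anti[OF ba _ inva]) (simp add: a_def)
  have ssym: "s x y = s y x" for x y by (simp add: s_def add.commute)
  obtain c where c: "\<And>x y. s x y = c * B x y"
    using schur_sym[OF bs ssym invs] by blast
  have "2 * n x y = s x y + a x y" for x y by (simp add: s_def a_def)
  then have "2 * n x y = c * B x y" for x y using c[of x y] a0[of x y] by simp
  then have "n x y = (c/2) * B x y" for x y by (auto simp: field_simps)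
  then show ?thesis by blast
qed

lemma schur_op:
  assumes lT: "linear T" and cT: "\<And>z x. T (br z x) = br z (T x)"
  shows "\<exists>c. \<forall>x. T x = c *\<^sub>R x"
proof -
  have bn: "bilinear (\<lambda>x y. B (T x) y)"
    unfolding bilinear_def linear_iff using lT B_bil
    by (simp add: bilinear_ladd bilinear_radd bilinear_lmul bilinear_rmul linear_add linear_scale)
  have "B (T (br z x)) y + B (T x) (br z y) = 0" for z x y
    using B_inv2[of z "T x" y] by (simp add: cT)
  then obtain c where c: "\<And>x y. B (T x) y = c * B x y" using schur[OF bn] by blast
  have "T x = c *\<^sub>R x" for x
  proof -
    have "B (T x - c *\<^sub>R x) y = 0" for y using c[of x y] B_bil
      by (simp add: bilinear_lsub bilinear_lmul)
    then have "T x - c *\<^sub>R x = 0" by (rule B_nondeg)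
    then show ?thesis by simp
  qed
  then show ?thesis by blast
qed

end

definition diag :: "'a \<Rightarrow> ('a::zero)^'m" where "diag x = (\<chi> i. x)"
definition emb :: "'m \<Rightarrow> 'a \<Rightarrow> ('a::zero)^'m" where "emb i x = (\<chi> k. if k = i then x else 0)"
definition tens :: "('m \<Rightarrow> real) \<Rightarrow> 'a \<Rightarrow> ('a::real_vector)^'m" where "tens s u = (\<chi> i. s i *\<^sub>R u)"

lemma diag_nth[simp]: "diag x $ i = x" by (simp add: diag_def)
lemma emb_nth: "emb i x $ k = (if k = i then x else 0)" by (simp add: emb_def)
lemma tens_nth[simp]: "tens s u $ i = s i *\<^sub>R u" by (simp add: tens_def)

lemma diag_sub_iff: "X \<in> diag_sub \<longleftrightarrow> X = diag (X $ i)"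
  by (auto simp: diag_sub_def diag_def vec_eq_iff)
lemma diag_in[simp]: "diag x \<in> diag_sub" by (auto simp: diag_sub_def diag_def)
lemma diag_sub_ex: "X \<in> diag_sub \<Longrightarrow> \<exists>x. X = diag x" by (auto simp: diag_sub_def diag_def)

lemma diag_add: "diag (x + y) = diag x + diag y" by (simp add: vec_eq_iff)
lemma diag_diff: "diag (x - y) = diag x - diag y" by (simp add: vec_eq_iff)
lemma diag_scale: "diag (c *\<^sub>R x) = c *\<^sub>R diag x" by (simp add: vec_eq_iff)
lemma diag_0[simp]: "diag 0 = 0" by (simp add: vec_eq_iff)
lemma diag_sum: "diag (sum f S) = (\<Sum>i\<in>S. diag (f i))"
  by (simp add: vec_eq_iff sum_component)
lemma diag_inj: "diag x = diag y \<longleftrightarrow> x = y" by (auto simp: vec_eq_iff)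

lemma subspace_diag: "subspace (diag_sub :: ('a::real_vector^'m) set)"
proof -
  have "(0::'a^'m) \<in> diag_sub" using diag_in[of "0::'a"] by simp
  moreover have "X + Y \<in> diag_sub" if "X \<in> diag_sub" "Y \<in> diag_sub" for X Y :: "'a^'m"
    using that by (metis diag_sub_ex diag_add diag_in)
  moreover have "c *\<^sub>R X \<in> diag_sub" if "X \<in> diag_sub" for X :: "'a^'m" and c
    using that by (metis diag_sub_ex diag_scale diag_in)
  ultimately show ?thesis by (simp add: subspace_def)
qed

lemma vec_emb_sum: "X = (\<Sum>i\<in>UNIV. emb i (X $ i))"
  by (simp add: vec_eq_iff sum_component emb_nth)

lemma tens_as_emb: "tens s u = (\<Sum>i\<in>UNIV. emb i (s i *\<^sub>R u))"
  by (simp add: vec_eq_iff sum_component emb_nth)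

context lie begin

lemma prod_br_nth[simp]: "prod_br br X Y $ i = br (X $ i) (Y $ i)" by (simp add: prod_br_def)
lemma prod_br_diag: "prod_br br (diag z) (diag w) = diag (br z w)" by (simp add: vec_eq_iff)
lemma prod_br_emb: "prod_br br (diag z) (emb i x) = emb i (br z x)" by (simp add: vec_eq_iff emb_nth)
lemma prod_br_tens: "prod_br br (tens s u) (tens t v) = tens (\<lambda>i. s i * t i) (br u v)"
  by (simp add: vec_eq_iff br_scale_l br_scale_r)
lemma prod_br_add_r: "prod_br br X (Y + Z) = prod_br br X Y + prod_br br X Z"
  by (simp add: vec_eq_iff br_add_r)
lemma prod_br_add_l: "prod_br br (X + Y) Z = prod_br br X Z + prod_br br Y Z"
  by (simp add: vec_eq_iff br_add_l)
lemma prod_br_diff_r: "prod_br br X (Y - Z) = prod_br br X Y - prod_br br X Z"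
  by (simp add: vec_eq_iff br_diff_r)
lemma prod_br_scale_r: "prod_br br X (c *\<^sub>R Y) = c *\<^sub>R prod_br br X Y"
  by (simp add: vec_eq_iff br_scale_r)

end

lemma rc_decomp:
  assumes "reductive_compl br p"
  shows "pcomp p X \<in> p \<and> X - pcomp p X \<in> diag_sub"
proof -
  from assms obtain A D where A: "A \<in> p" "D \<in> diag_sub" "X = A + D"
    unfolding reductive_compl_def by blast
  have ex: "\<exists>A. A \<in> p \<and> X - A \<in> diag_sub" using A by (intro exI[of _ A]) simp
  have uq: "A1 = A2" if "A1 \<in> p \<and> X - A1 \<in> diag_sub" "A2 \<in> p \<and> X - A2 \<in> diag_sub" for A1 A2
  proof -
    have sp: "subspace p" and pd: "p \<inter> diag_sub = {0}" using assms by (auto simp: reductive_compl_def)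
    have "A1 - A2 \<in> p" using that sp by (simp add: subspace_diff)
    moreover have "A1 - A2 \<in> diag_sub"
    proof -
      have "(X - A2) - (X - A1) \<in> diag_sub" using that subspace_diff[OF subspace_diag] by blast
      moreover have "(X - A2) - (X - A1) = A1 - A2" by simp
      ultimately show ?thesis by simp
    qed
    ultimately have "A1 - A2 = 0" using pd by blast
    then show ?thesis by simp
  qed
  show ?thesis unfolding pcomp_def
    by (rule theI'[of "\<lambda>A. A \<in> p \<and> X - A \<in> diag_sub"]) (use ex uq in blast)
qed

lemma rc_unique:
  assumes "reductive_compl br p" "A \<in> p" "X - A \<in> diag_sub"
  shows "pcomp p X = A"
proof -
  have sp: "subspace p" and pd: "p \<inter> diag_sub = {0}" using assms(1) by (auto simp: reductive_compl_def)
  note d = rc_decomp[OF assms(1), of X]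
  have "pcomp p X - A \<in> p" using d assms sp by (simp add: subspace_diff)
  moreover have "pcomp p X - A \<in> diag_sub"
  proof -
    have "(X - A) - (X - pcomp p X) \<in> diag_sub" using d assms subspace_diff[OF subspace_diag] by blast
    moreover have "(X - A) - (X - pcomp p X) = pcomp p X - A" by simp
    ultimately show ?thesis by simp
  qed
  ultimately have "pcomp p X - A = 0" using pd by blast
  then show ?thesis by simp
qed

lemma rc_in_p: "reductive_compl br p \<Longrightarrow> A \<in> p \<Longrightarrow> pcomp p A = A"
  by (rule rc_unique) (auto intro: subspace_0[OF subspace_diag])

lemma rc_subspace: "reductive_compl br p \<Longrightarrow> subspace p" by (simp add: reductive_compl_def)

lemma rc_linear:
  assumes "reductive_compl br p"
  shows "linear (pcomp p)"
proof (rule linearI)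
  note sp = rc_subspace[OF assms]
  fix X Y :: "('a::euclidean_space)^'b" and c :: real
  note dX = rc_decomp[OF assms, of X] and dY = rc_decomp[OF assms, of Y]
  show "pcomp p (X + Y) = pcomp p X + pcomp p Y"
  proof (rule rc_unique[OF assms])
    show "pcomp p X + pcomp p Y \<in> p" using dX dY sp by (simp add: subspace_add)
    have "(X - pcomp p X) + (Y - pcomp p Y) \<in> diag_sub" using dX dY subspace_add[OF subspace_diag] by blast
    then show "X + Y - (pcomp p X + pcomp p Y) \<in> diag_sub" by (simp add: algebra_simps)
  qed
  show "pcomp p (c *\<^sub>R X) = c *\<^sub>R pcomp p X"
  proof (rule rc_unique[OF assms])
    show "c *\<^sub>R pcomp p X \<in> p" using dX sp by (simp add: subspace_scale)
    have "c *\<^sub>R (X - pcomp p X) \<in> diag_sub" using dX subspace_scale[OF subspace_diag] by blast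
    then show "c *\<^sub>R X - c *\<^sub>R pcomp p X \<in> diag_sub" by (simp add: algebra_simps)
  qed
qed

context lie begin

lemma rc_equiv:
  assumes "reductive_compl br p"
  shows "pcomp p (prod_br br (diag z) V) = prod_br br (diag z) (pcomp p V)"
proof (rule rc_unique[OF assms])
  note d = rc_decomp[OF assms, of V]
  show "prod_br br (diag z) (pcomp p V) \<in> p"
    using assms d by (auto simp: reductive_compl_def)
  obtain w where w: "V - pcomp p V = diag w" using d diag_sub_ex by blast
  have "prod_br br (diag z) V - prod_br br (diag z) (pcomp p V) = prod_br br (diag z) (V - pcomp p V)"
    by (simp add: prod_br_diff_r)
  also have "\<dots> = diag (br z w)" by (simp add: w prod_br_diag)
  finally show "prod_br br (diag z) V - prod_br br (diag z) (pcomp p V) \<in> diag_sub" by simp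
qed

end

lemma im_bil: "inv_metric br M \<Longrightarrow> bilinear M" by (simp add: inv_metric_def)
lemma im_sym: "inv_metric br M \<Longrightarrow> M X Y = M Y X" by (simp add: inv_metric_def)
lemma im_h_l: "inv_metric br M \<Longrightarrow> D \<in> diag_sub \<Longrightarrow> M D Y = 0" by (simp add: inv_metric_def)
lemma im_h_r: "inv_metric br M \<Longrightarrow> D \<in> diag_sub \<Longrightarrow> M Y D = 0"
  by (metis im_h_l im_sym)
lemma im_pos: "inv_metric br M \<Longrightarrow> X \<notin> diag_sub \<Longrightarrow> M X X > 0" by (simp add: inv_metric_def)
lemma im_inv: "inv_metric br M \<Longrightarrow> M (prod_br br (diag z) X) Y + M X (prod_br br (diag z) Y) = 0"
  unfolding inv_metric_def using diag_in by blast

lemma im_shift: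
  assumes "inv_metric br M" "X - X' \<in> diag_sub" "Y - Y' \<in> diag_sub"
  shows "M X Y = M X' Y'"
proof -
  have b: "bilinear M" using assms(1) by (rule im_bil)
  define D1 where "D1 = X - X'"
  define D2 where "D2 = Y - Y'"
  have X: "X = X' + D1" and Y: "Y = Y' + D2" by (simp_all add: D1_def D2_def)
  have d: "D1 \<in> diag_sub" "D2 \<in> diag_sub" using assms by (simp_all add: D1_def D2_def)
  have "M X Y = M X' Y' + M X' D2 + M D1 Y' + M D1 D2"
    unfolding X Y using b by (simp add: bilinear_ladd bilinear_radd)
  also have "\<dots> = M X' Y'" using d im_h_l[OF assms(1)] im_h_r[OF assms(1)] by simp
  finally show ?thesis .
qed

lemma generated_self:
  assumes "inv_metric br M" "reductive_compl br p"
  shows "generated_by br M p M"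
  unfolding generated_by_def
proof (intro conjI allI)
  show "reductive_compl br p" by fact
  fix X Y show "M X Y = M (pcomp p X) (pcomp p Y)"
    using im_shift[OF assms(1)] rc_decomp[OF assms(2)] by blast
qed

lemma generated_ip:
  assumes "generated_by br M p ip" "X \<in> p" "Y \<in> p"
  shows "ip X Y = M X Y"
proof -
  have rc: "reductive_compl br p" using assms(1) by (simp add: generated_by_def)
  have "M X Y = ip (pcomp p X) (pcomp p Y)" using assms(1) by (simp add: generated_by_def)
  then show ?thesis using rc_in_p[OF rc assms(2)] rc_in_p[OF rc assms(3)] by simp
qed

lemma emb_add: "emb i (x + (y::'a::real_vector)) = emb i x + emb i y" by (auto simp: vec_eq_iff emb_nth)
lemma emb_scale: "emb i (c *\<^sub>R x) = c *\<^sub>R emb i x" by (auto simp: vec_eq_iff emb_nth)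
lemma emb_0[simp]: "emb i (0::'a::real_vector) = 0" by (auto simp: vec_eq_iff emb_nth)
lemma emb_diff: "emb i (x - (y::'a::real_vector)) = emb i x - emb i y" by (auto simp: vec_eq_iff emb_nth)

lemma emb_not_diag:
  assumes "CARD('m::finite) \<ge> 2" "x \<noteq> 0"
  shows "(emb (i::'m) x :: ('a::real_vector)^'m) \<notin> diag_sub"
proof
  assume "emb i x \<in> diag_sub"
  have "UNIV \<noteq> {i}"
  proof
    assume "UNIV = {i}"
    then have "card (UNIV::'m set) = card {i}" by (rule arg_cong)
    then have "CARD('m) = 1" by simp
    with assms(1) show False by simp
  qed
  then obtain k :: 'm where k: "k \<noteq> i" by blast
  have "emb i x = diag (emb i x $ i)" using diag_sub_iff \<open>emb i x \<in> diag_sub\<close> by blast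
  then have "emb i x = diag x" by (simp add: emb_nth)
  then have "emb i x $ k = x" by simp
  then show False using k assms(2) by (simp add: emb_nth)
qed

lemma exists_nonzero: "\<exists>x::'a::euclidean_space. x \<noteq> 0"
  using nonempty_Basis nonzero_Basis by blast

context slie begin

lemma metric_coeffs:
  fixes M :: "'a^'m::finite \<Rightarrow> 'a^'m \<Rightarrow> real"
  assumes im: "inv_metric br M"
  shows "\<exists>a. \<forall>i k x y. M (emb i x) (emb k y) = a i k * B x y"
proof -
  have bM: "bilinear M" using im by (rule im_bil)
  have h: "\<forall>i k. \<exists>c. \<forall>x y. M (emb i x) (emb k y) = c * B x y"
  proof (intro allI)
    fix i k
    have bn: "bilinear (\<lambda>x y. M (emb i x) (emb k y))"
      unfolding bilinear_def linear_iff using bM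
      by (simp add: emb_add emb_scale bilinear_ladd bilinear_radd bilinear_lmul bilinear_rmul)
    have "M (emb i (br z x)) (emb k y) + M (emb i x) (emb k (br z y)) = 0" for z x y
      using im_inv[OF im, of z "emb i x" "emb k y"] by (simp add: prod_br_emb)
    then show "\<exists>c. \<forall>x y. M (emb i x) (emb k y) = c * B x y" using schur[OF bn] by blast
  qed
  then have "\<forall>i. \<exists>g. \<forall>k x y. M (emb i x) (emb k y) = g k * B x y" by (metis choice)
  then obtain a where "\<forall>i k x y. M (emb i x) (emb k y) = a i k * B x y" by (metis choice)
  then show ?thesis by blast
qed

lemma metric_expand:
  fixes M :: "'a^'m::finite \<Rightarrow> 'a^'m \<Rightarrow> real"
  assumes im: "inv_metric br M" and a: "\<And>i k x y. M (emb i x) (emb k y) = a i k * B x y"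
  shows "M X Y = (\<Sum>i\<in>UNIV. \<Sum>k\<in>UNIV. a i k * B (X$i) (Y$k))"
proof -
  have bM: "bilinear M" using im by (rule im_bil)
  have "M X Y = M (\<Sum>i\<in>UNIV. emb i (X $ i)) (\<Sum>k\<in>UNIV. emb k (Y $ k))"
    using vec_emb_sum[of X] vec_emb_sum[of Y] by simp
  also have "\<dots> = (\<Sum>(i,k)\<in>UNIV \<times> UNIV. M (emb i (X $ i)) (emb k (Y $ k)))"
    by (rule bilinear_sum[OF bM])
  also have "\<dots> = (\<Sum>i\<in>UNIV. \<Sum>k\<in>UNIV. M (emb i (X $ i)) (emb k (Y $ k)))"
    by (rule sum.cartesian_product[symmetric])
  also have "\<dots> = (\<Sum>i\<in>UNIV. \<Sum>k\<in>UNIV. a i k * B (X$i) (Y$k))"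
    by (simp add: a)
  finally show ?thesis .
qed

lemma coeff_sym:
  assumes im: "inv_metric br M" and a: "\<And>i k x y. M (emb i x) (emb k y) = a i k * B x y"
  shows "a i k = a k i"
proof -
  obtain x :: 'a where x: "x \<noteq> 0" using exists_nonzero by blast
  have "a i k * B x x = a k i * B x x" using a[of i x k x] a[of k x i x] im_sym[OF im] by metis
  then show ?thesis using B_pos[OF x] by simp
qed

lemma coeff_row:
  fixes M :: "'a^'m::finite \<Rightarrow> 'a^'m \<Rightarrow> real"
  assumes im: "inv_metric br M" and a: "\<And>i k x y. M (emb i x) (emb k y) = a i k * B x y"
  shows "(\<Sum>k\<in>UNIV. a i k) = 0"
proof -
  obtain x :: 'a where x: "x \<noteq> 0" using exists_nonzero by blast
  have "0 = M (emb i x) (diag x :: 'a^'m)" using im_h_r[OF im] by simp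
  also have "\<dots> = (\<Sum>ia\<in>UNIV. if ia = i then (\<Sum>k\<in>UNIV. a i k) * B x x else 0)"
    unfolding metric_expand[OF im a]
    by (rule sum.cong) (auto simp: emb_nth sum_distrib_right)
  also have "\<dots> = (\<Sum>k\<in>UNIV. a i k) * B x x" by simp
  finally show ?thesis using B_pos[OF x] by simp
qed

lemma coeff_pos:
  fixes M :: "'a^'m::finite \<Rightarrow> 'a^'m \<Rightarrow> real"
  assumes im: "inv_metric br M" and a: "\<And>i k x y. M (emb i x) (emb k y) = a i k * B x y"
    and card: "CARD('m) \<ge> 2"
  shows "a i i > 0"
proof -
  obtain x :: 'a where x: "x \<noteq> 0" using exists_nonzero by blast
  have "M (emb i x) (emb i x) > 0" by (rule im_pos[OF im emb_not_diag[OF card x]])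
  then show ?thesis using a[of i x i x] B_pos[OF x] by (simp add: zero_less_mult_iff)
qed

lemma metric_tens:
  fixes M :: "'a^'m::finite \<Rightarrow> 'a^'m \<Rightarrow> real"
  assumes im: "inv_metric br M" and a: "\<And>i k x y. M (emb i x) (emb k y) = a i k * B x y"
  shows "M (tens s u) (tens t v) = (\<Sum>i\<in>UNIV. \<Sum>k\<in>UNIV. s i * t k * a i k) * B u v"
proof -
  have "M (tens s u) (tens t v) = (\<Sum>i\<in>UNIV. \<Sum>k\<in>UNIV. (s i * t k * a i k) * B u v)"
    unfolding metric_expand[OF im a]
    by (intro sum.cong refl) (simp add: B_bil bilinear_lmul bilinear_rmul mult_ac)
  also have "\<dots> = (\<Sum>i\<in>UNIV. \<Sum>k\<in>UNIV. s i * t k * a i k) * B u v"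
    by (simp add: sum_distrib_right)
  finally show ?thesis .
qed

lemma compl_coeffs:
  fixes p :: "('a^'m::finite) set"
  assumes rc: "reductive_compl br p"
  shows "\<exists>c. (\<forall>V. pcomp p V = V - diag (\<Sum>i\<in>UNIV. c i *\<^sub>R V $ i)) \<and> (\<Sum>i\<in>UNIV. c i) = 1"
proof -
  define pi where "pi V = V - pcomp p V" for V
  have lp: "linear (pcomp p)" by (rule rc_linear[OF rc])
  have lpi: "linear pi" unfolding pi_def using lp
    by (intro linearI) (simp_all add: linear_add linear_scale algebra_simps)
  have pid: "pi V \<in> diag_sub" for V using rc_decomp[OF rc] by (simp add: pi_def)
  have pieq: "pi (prod_br br (diag z) V) = prod_br br (diag z) (pi V)" for z V
    by (simp add: pi_def rc_equiv[OF rc] prod_br_diff_r)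
  have h: "\<forall>i. \<exists>c. \<forall>x. pi (emb i x) $ i = c *\<^sub>R x"
  proof
    fix i
    have lT: "linear (\<lambda>x. pi (emb i x) $ i)"
      using lpi by (intro linearI) (simp_all add: emb_add emb_scale linear_add linear_scale)
    have "pi (emb i (br z x)) $ i = br z (pi (emb i x) $ i)" for z x
      using pieq[of z "emb i x"] by (simp add: prod_br_emb)
    then show "\<exists>c. \<forall>x. pi (emb i x) $ i = c *\<^sub>R x" using schur_op[OF lT] by blast
  qed
  then obtain c where c: "\<And>i x. pi (emb i x) $ i = c i *\<^sub>R x" by (metis choice)
  have pe: "pi (emb i x) = diag (c i *\<^sub>R x)" for i x
    using pid[of "emb i x"] diag_sub_iff[of "pi (emb i x)" i] c by simp
  have pv: "pi V = diag (\<Sum>i\<in>UNIV. c i *\<^sub>R V $ i)" for V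
  proof -
    have "pi V = pi (\<Sum>i\<in>UNIV. emb i (V $ i))" using vec_emb_sum[of V] by simp
    also have "\<dots> = (\<Sum>i\<in>UNIV. pi (emb i (V $ i)))" using lpi by (simp add: linear_sum)
    also have "\<dots> = diag (\<Sum>i\<in>UNIV. c i *\<^sub>R V $ i)" by (simp add: pe diag_sum)
    finally show ?thesis .
  qed
  have pc: "pcomp p V = V - diag (\<Sum>i\<in>UNIV. c i *\<^sub>R V $ i)" for V
  proof -
    have e: "V - pcomp p V = diag (\<Sum>i\<in>UNIV. c i *\<^sub>R V $ i)" using pv[of V] by (simp add: pi_def)
    show ?thesis unfolding e[symmetric] by simp
  qed
  obtain x :: 'a where x: "x \<noteq> 0" using exists_nonzero by blast
  have "pcomp p (diag x :: 'a^'m) = 0"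
    by (rule rc_unique[OF rc]) (auto intro: subspace_0[OF rc_subspace[OF rc]])
  then have "diag x = (diag (\<Sum>i\<in>UNIV. c i *\<^sub>R x) :: 'a^'m)" using pc[of "diag x"] by simp
  then have "x = (\<Sum>i\<in>UNIV. c i *\<^sub>R x)" by (simp only: diag_inj)
  then have "1 *\<^sub>R x = (\<Sum>i\<in>UNIV. c i) *\<^sub>R x" by (simp add: scaleR_sum_left)
  then have "(\<Sum>i\<in>UNIV. c i) = 1" using x scaleR_cancel_right by metis
  with pc show ?thesis by blast
qed

end

definition Qf :: "('m::finite \<Rightarrow> 'm \<Rightarrow> real) \<Rightarrow> ('m \<Rightarrow> real) \<Rightarrow> ('m \<Rightarrow> real) \<Rightarrow> real" where
  "Qf a u v = (\<Sum>i\<in>UNIV. \<Sum>k\<in>UNIV. u i * v k * a i k)"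
definition Pic :: "('m::finite \<Rightarrow> real) \<Rightarrow> ('m \<Rightarrow> real) \<Rightarrow> 'm \<Rightarrow> real" where
  "Pic c s = (\<lambda>i. s i - (\<Sum>k\<in>UNIV. c k * s k))"
definition dl :: "'m \<Rightarrow> 'm \<Rightarrow> real" where "dl p = (\<lambda>i. if i = p then 1 else 0)"

lemma sum_dl: "(\<Sum>k\<in>UNIV. dl (p::'m::finite) k * f k) = f p"
proof -
  have e: "(\<lambda>k. dl p k * f k) = (\<lambda>k. if k = p then f k else 0)" by (auto simp: dl_def)
  show ?thesis unfolding e by simp
qed
lemma dl_self[simp]: "dl p p = 1" by (simp add: dl_def)
lemma dl_other: "q \<noteq> p \<Longrightarrow> dl p q = 0" by (simp add: dl_def)
lemma dl_sq: "dl p i * dl p i = dl p i" by (simp add: dl_def)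

lemma Pic_dl: "Pic c (dl p) = (\<lambda>i. dl p i - c p)"
  by (simp add: Pic_def dl_def if_distrib cong: if_cong)

lemma Qf_dl_right:
  assumes rows: "\<And>i. (\<Sum>k\<in>UNIV. a i k) = 0"
  shows "Qf a u (\<lambda>k. dl p k - l) = (\<Sum>i\<in>UNIV. u i * a i p)"
proof -
  have r: "(\<Sum>k\<in>UNIV. (dl p k - l) * a i k) = a i p" for i
  proof -
    have "(\<Sum>k\<in>UNIV. (dl p k - l) * a i k) = (\<Sum>k\<in>UNIV. dl p k * a i k) - l * (\<Sum>k\<in>UNIV. a i k)"
      by (simp add: algebra_simps sum_subtractf sum_distrib_left)
    also have "\<dots> = a i p" using rows[of i] by (simp add: sum_dl)
    finally show ?thesis .
  qed
  have "Qf a u (\<lambda>k. dl p k - l) = (\<Sum>i\<in>UNIV. u i * (\<Sum>k\<in>UNIV. (dl p k - l) * a i k))"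
    unfolding Qf_def by (simp add: sum_distrib_left mult.assoc)
  also have "\<dots> = (\<Sum>i\<in>UNIV. u i * a i p)" by (simp add: r)
  finally show ?thesis .
qed

lemma E2_alg:
  fixes a :: "'m::finite \<Rightarrow> 'm \<Rightarrow> real" and c :: "'m \<Rightarrow> real"
  assumes sym: "\<And>i k. a i k = a k i" and rows: "\<And>i. (\<Sum>k\<in>UNIV. a i k) = 0" and pq: "p \<noteq> q"
    and eq: "Qf a (\<lambda>i. Pic c (dl q) i * Pic c (dl p) i) (Pic c (dl p))
           = Qf a (\<lambda>i. Pic c (dl p) i * Pic c (dl p) i) (Pic c (dl q))"
  shows "(1 - c p) * a p q + c q * a p p = 0"
proof -
  have cols: "(\<Sum>i\<in>UNIV. a i k) = 0" for k using rows[of k] sym by simp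
  have L: "Qf a (\<lambda>i. Pic c (dl q) i * Pic c (dl p) i) (Pic c (dl p)) = - c p * a q p - c q * a p p"
  proof -
    have "Qf a (\<lambda>i. Pic c (dl q) i * Pic c (dl p) i) (Pic c (dl p))
        = (\<Sum>i\<in>UNIV. (dl q i - c q) * (dl p i - c p) * a i p)"
      unfolding Pic_dl by (rule Qf_dl_right[OF rows])
    also have "\<dots> = (\<Sum>i\<in>UNIV. dl q i * dl p i * a i p) - c p * (\<Sum>i\<in>UNIV. dl q i * a i p)
         - c q * (\<Sum>i\<in>UNIV. dl p i * a i p) + c q * c p * (\<Sum>i\<in>UNIV. a i p)"
      by (simp add: algebra_simps sum_subtractf sum.distrib sum_distrib_left)
    also have "\<dots> = - c p * a q p - c q * a p p"
      using pq cols[of p] by (simp add: mult.assoc sum_dl dl_other)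
    finally show ?thesis .
  qed
  have R: "Qf a (\<lambda>i. Pic c (dl p) i * Pic c (dl p) i) (Pic c (dl q)) = (1 - 2 * c p) * a p q"
  proof -
    have "Qf a (\<lambda>i. Pic c (dl p) i * Pic c (dl p) i) (Pic c (dl q))
        = (\<Sum>i\<in>UNIV. (dl p i - c p) * (dl p i - c p) * a i q)"
      unfolding Pic_dl by (rule Qf_dl_right[OF rows])
    also have "\<dots> = (\<Sum>i\<in>UNIV. dl p i * dl p i * a i q) - 2 * c p * (\<Sum>i\<in>UNIV. dl p i * a i q)
         + c p * c p * (\<Sum>i\<in>UNIV. a i q)"
      by (simp add: algebra_simps sum_subtractf sum.distrib sum_distrib_left)
    also have "\<dots> = (1 - 2 * c p) * a p q"
      using cols[of q] by (simp add: dl_sq sum_dl algebra_simps)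
    finally show ?thesis .
  qed
  show ?thesis using eq L R sym[of q p] by (simp add: algebra_simps)
qed

context slie begin

lemma B_swap: "B (br y z) x = - B (br x z) y"
proof -
  have "B (br y z) x = B y (br z x)" by (rule B_inv)
  also have "\<dots> = B (br z x) y" by (rule B_sym)
  also have "\<dots> = - B (br x z) y" using anti[of z x] B_bil by (simp add: bilinear_lneg)
  finally show ?thesis .
qed

lemma pcomp_tens:
  assumes pc: "\<And>V. pcomp p V = V - diag (\<Sum>i\<in>UNIV. c i *\<^sub>R V $ i)"
  shows "pcomp p (tens s u :: 'a^'m::finite) = tens (Pic c s) u"
proof -
  have "(\<Sum>i\<in>UNIV. c i *\<^sub>R (s i *\<^sub>R u)) = (\<Sum>k\<in>UNIV. c k * s k) *\<^sub>R u"
    by (simp add: scaleR_sum_left)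
  then show ?thesis unfolding pc by (simp add: vec_eq_iff Pic_def scaleR_diff_left)
qed

lemma NR_Q:
  fixes M :: "'a^'m::finite \<Rightarrow> 'a^'m \<Rightarrow> real"
  assumes im: "inv_metric br M" and a: "\<And>i k x y. M (emb i x) (emb k y) = a i k * B x y"
    and rc: "reductive_compl br p"
    and pc: "\<And>V. pcomp p V = V - diag (\<Sum>i\<in>UNIV. c i *\<^sub>R V $ i)"
    and nr: "\<And>X Y. X \<in> p \<Longrightarrow> Y \<in> p \<Longrightarrow> M (prod_br br X Y) X = 0"
  shows "Qf a (\<lambda>i. Pic c s1 i * Pic c r i) (Pic c s2) = Qf a (\<lambda>i. Pic c s2 i * Pic c r i) (Pic c s1)"
proof -
  have bM: "bilinear M" using im by (rule im_bil)
  obtain x z where xz: "br x z \<noteq> 0" using nonab by blast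
  define y where "y = br x z"
  define S1 where "S1 = Pic c s1"
  define S2 where "S2 = Pic c s2"
  define R where "R = Pic c r"
  have inp: "tens (Pic c s) u \<in> p" for s and u :: 'a
    using rc_decomp[OF rc, of "tens s u"] pcomp_tens[OF pc] by simp
  define X :: "'a^'m" where "X = tens S1 x + tens S2 y"
  define Y :: "'a^'m" where "Y = tens R z"
  have Xp: "X \<in> p" unfolding X_def S1_def S2_def
    using inp subspace_add[OF rc_subspace[OF rc]] by blast
  have Yp: "Y \<in> p" unfolding Y_def R_def using inp by blast
  have XY: "prod_br br X Y = tens (\<lambda>i. S1 i * R i) (br x z) + tens (\<lambda>i. S2 i * R i) (br y z)"
    unfolding X_def Y_def by (simp add: prod_br_add_l prod_br_tens)
  have "0 = M (prod_br br X Y) X" using nr[OF Xp Yp] by simp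
  also have "\<dots> = Qf a (\<lambda>i. S1 i * R i) S1 * B (br x z) x + Qf a (\<lambda>i. S1 i * R i) S2 * B (br x z) y
      + Qf a (\<lambda>i. S2 i * R i) S1 * B (br y z) x + Qf a (\<lambda>i. S2 i * R i) S2 * B (br y z) y"
    unfolding XY unfolding X_def using bM
    by (simp add: bilinear_ladd bilinear_radd metric_tens[OF im a] Qf_def)
  also have "\<dots> = (Qf a (\<lambda>i. S1 i * R i) S2 - Qf a (\<lambda>i. S2 i * R i) S1) * B y y"
  proof -
    have ya: "B (br x z) y = B y y" by (simp add: y_def)
    show ?thesis by (simp add: B_alt3 B_swap[of y z x] ya algebra_simps)
  qed
  finally have "(Qf a (\<lambda>i. S1 i * R i) S2 - Qf a (\<lambda>i. S2 i * R i) S1) * B y y = 0" by simp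
  moreover have "B y y > 0" using B_pos xz by (simp add: y_def)
  ultimately show ?thesis by (simp add: S1_def S2_def R_def)
qed

end

lemma sum_single:
  assumes "\<And>k. k \<noteq> i \<Longrightarrow> f k = (0::real)"
  shows "(\<Sum>k\<in>(UNIV::'m::finite set). f k) = f i"
proof -
  have "(\<Sum>k\<in>UNIV. f k) = f i + (\<Sum>k\<in>UNIV - {i}. f k)"
    by (simp add: sum.remove[of UNIV i])
  also have "(\<Sum>k\<in>UNIV - {i}. f k) = 0" using assms by (intro sum.neutral) auto
  finally show ?thesis by simp
qed

context lie begin

lemma rc_axis: "reductive_compl br {X::'a^'m::finite. X $ j = 0}"
  unfolding reductive_compl_def
proof (intro conjI allI ballI)
  show "subspace {X::'a^'m. X $ j = 0}" by (simp add: subspace_def)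
  show "{X::'a^'m. X $ j = 0} \<inter> diag_sub = {0}"
  proof (intro equalityI subsetI)
    fix X :: "'a^'m" assume "X \<in> {X. X $ j = 0} \<inter> diag_sub"
    then have "X = diag (X $ j)" "X $ j = 0" using diag_sub_iff by blast+
    then show "X \<in> {0}" by simp
  next
    fix X :: "'a^'m" assume "X \<in> {0}" then show "X \<in> {X. X $ j = 0} \<inter> diag_sub"
      using diag_in[of "0::'a"] by simp
  qed
  fix X :: "'a^'m"
  show "\<exists>A\<in>{X. X $ j = 0}. \<exists>B\<in>diag_sub. X = A + B"
    by (rule bexI[of _ "X - diag (X $ j)"], rule bexI[of _ "diag (X $ j)"]) auto
next
  fix Z X :: "'a^'m" assume "Z \<in> diag_sub" "X \<in> {X. X $ j = 0}"
  then show "prod_br br Z X \<in> {X. X $ j = 0}" by simp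
qed

lemma rc_alpha:
  fixes \<alpha> :: "'m::finite \<Rightarrow> real"
  assumes S: "(\<Sum>i\<in>UNIV. \<alpha> i) \<noteq> 0"
  shows "reductive_compl br {X::'a^'m. (\<Sum>i\<in>UNIV. \<alpha> i *\<^sub>R X $ i) = 0}"
  unfolding reductive_compl_def
proof (intro conjI allI ballI)
  let ?P = "{X::'a^'m. (\<Sum>i\<in>UNIV. \<alpha> i *\<^sub>R X $ i) = 0}"
  have sc: "(\<Sum>i\<in>UNIV. \<alpha> i *\<^sub>R (c *\<^sub>R X) $ i) = c *\<^sub>R (\<Sum>i\<in>UNIV. \<alpha> i *\<^sub>R X $ i)" for c and X :: "'a^'m"
    by (simp add: scaleR_sum_right scaleR_scaleR mult.commute)
  show "subspace ?P"
    unfolding subspace_def using sc by (simp add: scaleR_add_right sum.distrib)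
  show "?P \<inter> diag_sub = {0}"
  proof (intro equalityI subsetI)
    fix X :: "'a^'m" assume X: "X \<in> ?P \<inter> diag_sub"
    then obtain d where d: "X = diag d" using diag_sub_ex by blast
    have "(\<Sum>i\<in>UNIV. \<alpha> i) *\<^sub>R d = 0" using X d by (simp add: scaleR_sum_left)
    then have "d = 0" using S by simp
    then show "X \<in> {0}" using d by simp
  next
    fix X :: "'a^'m" assume "X \<in> {0}" then show "X \<in> ?P \<inter> diag_sub"
      using diag_in[of "0::'a"] by simp
  qed
  fix X :: "'a^'m"
  define d where "d = (1 / (\<Sum>i\<in>UNIV. \<alpha> i)) *\<^sub>R (\<Sum>i\<in>UNIV. \<alpha> i *\<^sub>R X $ i)"
  have "(\<Sum>i\<in>UNIV. \<alpha> i *\<^sub>R (X - diag d) $ i) = (\<Sum>i\<in>UNIV. \<alpha> i *\<^sub>R X $ i) - (\<Sum>i\<in>UNIV. \<alpha> i) *\<^sub>R d"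
    by (simp add: scaleR_diff_right sum_subtractf scaleR_sum_left)
  also have "\<dots> = 0" using S by (simp add: d_def)
  finally have "X - diag d \<in> ?P" by simp
  then show "\<exists>A\<in>?P. \<exists>B\<in>diag_sub. X = A + B"
    by (intro bexI[of _ "X - diag d"] bexI[of _ "diag d"]) auto
next
  fix Z X :: "'a^'m"
  assume "Z \<in> diag_sub" "X \<in> {X::'a^'m. (\<Sum>i\<in>UNIV. \<alpha> i *\<^sub>R X $ i) = 0}"
  then obtain z where z: "Z = diag z" and X: "(\<Sum>i\<in>UNIV. \<alpha> i *\<^sub>R X $ i) = 0"
    using diag_sub_ex by blast
  have "(\<Sum>i\<in>UNIV. \<alpha> i *\<^sub>R prod_br br Z X $ i) = br z (\<Sum>i\<in>UNIV. \<alpha> i *\<^sub>R X $ i)"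
    by (simp add: z br_sum_r br_scale_r)
  then show "prod_br br Z X \<in> {X::'a^'m. (\<Sum>i\<in>UNIV. \<alpha> i *\<^sub>R X $ i) = 0}" using X by simp
qed

end

context clie begin

lemma B_sum_l: "B (sum f S) y = (\<Sum>i\<in>S. B (f i) y)"
proof -
  have "linear (\<lambda>x. B x y)" using B_bil by (simp add: bilinear_def)
  then show ?thesis by (simp add: linear_sum[of "\<lambda>x. B x y", simplified])
qed

lemma B_sum_r: "B y (sum f S) = (\<Sum>i\<in>S. B y (f i))"
  using B_sum_l[of f S y] by (simp add: B_sym)

lemma B_scale_l: "B (c *\<^sub>R x) y = c * B x y" using B_bil by (simp add: bilinear_lmul)
lemma B_scale_r: "B x (c *\<^sub>R y) = c * B x y" using B_bil by (simp add: bilinear_rmul)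
lemma B_diff_l: "B (x - z) y = B x y - B z y" using B_bil by (simp add: bilinear_lsub)

lemma p_alpha_eq:
  fixes \<alpha> :: "'m::finite \<Rightarrow> real"
  shows "{X::'a^'m. \<forall>Y\<in>diag_sub. (\<Sum>i\<in>UNIV. \<alpha> i * negkill_i br i X Y) = 0}
       = {X. (\<Sum>i\<in>UNIV. \<alpha> i *\<^sub>R X $ i) = 0}"
proof -
  have e: "(\<Sum>i\<in>UNIV. \<alpha> i * negkill_i br i X (diag y)) = B (\<Sum>i\<in>UNIV. \<alpha> i *\<^sub>R X $ i) y"
    for X :: "'a^'m" and y
    by (simp add: negkill_i_B B_sum_l B_scale_l)
  show ?thesis
  proof (intro equalityI subsetI)
    fix X :: "'a^'m" assume "X \<in> {X. \<forall>Y\<in>diag_sub. (\<Sum>i\<in>UNIV. \<alpha> i * negkill_i br i X Y) = 0}"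
    then have "B (\<Sum>i\<in>UNIV. \<alpha> i *\<^sub>R X $ i) y = 0" for y using e[of X y] diag_in[of y] by auto
    then show "X \<in> {X. (\<Sum>i\<in>UNIV. \<alpha> i *\<^sub>R X $ i) = 0}" using B_nondeg by auto
  next
    fix X :: "'a^'m" assume X: "X \<in> {X. (\<Sum>i\<in>UNIV. \<alpha> i *\<^sub>R X $ i) = 0}"
    show "X \<in> {X. \<forall>Y\<in>diag_sub. (\<Sum>i\<in>UNIV. \<alpha> i * negkill_i br i X Y) = 0}"
    proof (intro CollectI ballI)
      fix Y :: "'a^'m" assume "Y \<in> diag_sub"
      then obtain y where "Y = diag y" using diag_sub_ex by blast
      then show "(\<Sum>i\<in>UNIV. \<alpha> i * negkill_i br i X Y) = 0" using e[of X y] X by simp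
    qed
  qed
qed

end

lemma sum_two:
  fixes f :: "'m::finite \<Rightarrow> real"
  assumes "i \<noteq> j" "\<And>l. l \<noteq> i \<Longrightarrow> l \<noteq> j \<Longrightarrow> f l = 0"
  shows "(\<Sum>l\<in>UNIV. f l) = f i + f j"
proof -
  have "(\<Sum>l\<in>UNIV. f l) = (\<Sum>l\<in>{i,j}. f l)"
    by (rule sum.mono_neutral_right) (use assms in auto)
  then show ?thesis using assms(1) by simp
qed

lemma caseB_alg:
  fixes a :: "'m::finite \<Rightarrow> 'm \<Rightarrow> real" and c :: "'m \<Rightarrow> real"
  assumes sym: "\<And>i k. a i k = a k i" and pos: "\<And>i. a i i > 0"
    and E2: "\<And>p q. p \<noteq> q \<Longrightarrow> (1 - c p) * a p q + c q * a p p = 0"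
    and sc: "(\<Sum>i\<in>UNIV. c i) = 1" and n1: "\<And>j. c j \<noteq> 1"
  shows "\<exists>\<mu>. \<mu> \<noteq> 0 \<and> (\<forall>i. c i \<noteq> 0) \<and> (\<forall>i k. a i k = \<mu> * ((if i = k then c i else 0) - c i * c k))"
proof -
  define al where "al p = a p p / (1 - c p)" for p
  have n1': "1 - c p \<noteq> 0" for p using n1[of p] by simp
  have app: "a p p = al p * (1 - c p)" for p using n1'[of p] by (simp add: al_def)
  have apq: "a p q = - c q * al p" if "p \<noteq> q" for p q
  proof -
    have "(1 - c p) * a p q = - c q * a p p" using E2[OF that] by simp
    then show ?thesis using n1'[of p] by (simp add: al_def field_simps)
  qed
  have csym: "c q * al p = c p * al q" if "p \<noteq> q" for p q
    using apq[OF that] apq[of q p] that sym[of p q] by simp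
  obtain r where r: "c r \<noteq> 0"
  proof -
    have "\<not> (\<forall>i. c i = 0)"
    proof
      assume "\<forall>i. c i = 0"
      then have "(\<Sum>i\<in>UNIV. c i) = 0" by simp
      with sc show False by simp
    qed
    then show ?thesis using that by blast
  qed
  define \<mu> where "\<mu> = al r / c r"
  have alc: "al p = \<mu> * c p" for p
  proof (cases "p = r")
    case True then show ?thesis using r by (simp add: \<mu>_def)
  next
    case False
    have "c r * al p = c p * al r" using csym[of r p] False by simp
    then show ?thesis using r by (simp add: \<mu>_def field_simps)
  qed
  have app2: "a p p = \<mu> * c p * (1 - c p)" for p using app[of p] alc[of p] by simp
  have mu0: "\<mu> \<noteq> 0" using pos[of r] app2[of r] by auto
  have c0: "c i \<noteq> 0" for i using pos[of i] app2[of i] by auto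
  have "a i k = \<mu> * ((if i = k then c i else 0) - c i * c k)" for i k
  proof (cases "i = k")
    case True then show ?thesis using app2[of i] by (simp add: algebra_simps)
  next
    case False then show ?thesis using apq[OF False] alc[of i] by (simp add: algebra_simps)
  qed
  then show ?thesis using mu0 c0 by blast
qed

lemma Qf_formula:
  fixes a :: "'m::finite \<Rightarrow> 'm \<Rightarrow> real"
  assumes af: "\<And>i k. a i k = \<mu> * ((if i = k then c i else 0) - c i * c k)"
  shows "Qf a s t = \<mu> * (\<Sum>l\<in>UNIV. c l * s l * t l) - \<mu> * ((\<Sum>l\<in>UNIV. c l * s l) * (\<Sum>l\<in>UNIV. c l * t l))"
proof -
  have i1: "(\<Sum>k\<in>UNIV. s i * t k * (if i = k then c i else 0)) = c i * s i * t i" for i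
    by (subst sum_single[of i]) auto
  have "Qf a s t = (\<Sum>i\<in>UNIV. \<Sum>k\<in>UNIV. \<mu> * (s i * t k * (if i = k then c i else 0)) - \<mu> * ((c i * s i) * (c k * t k)))"
    unfolding Qf_def af by (intro sum.cong refl) (simp add: algebra_simps)
  also have "\<dots> = \<mu> * (\<Sum>i\<in>UNIV. \<Sum>k\<in>UNIV. s i * t k * (if i = k then c i else 0))
      - \<mu> * (\<Sum>i\<in>UNIV. \<Sum>k\<in>UNIV. (c i * s i) * (c k * t k))"
    by (simp add: sum_subtractf sum_distrib_left)
  also have "\<dots> = \<mu> * (\<Sum>l\<in>UNIV. c l * s l * t l) - \<mu> * ((\<Sum>l\<in>UNIV. c l * s l) * (\<Sum>l\<in>UNIV. c l * t l))"
    by (simp add: i1 sum_product)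
  finally show ?thesis .
qed

lemma signs_alg:
  fixes a :: "'m::finite \<Rightarrow> 'm \<Rightarrow> real"
  assumes af: "\<And>i k. a i k = \<mu> * ((if i = k then c i else 0) - c i * c k)"
    and mu0: "\<mu> \<noteq> 0" and c0: "\<And>i. c i \<noteq> 0" and sc: "(\<Sum>i\<in>UNIV. c i) = 1"
    and pos: "\<And>i. a i i > 0"
    and Qpos: "\<And>s i k. s i \<noteq> s k \<Longrightarrow> Qf a s s > 0"
  shows "(\<forall>i. \<mu> * c i > 0) \<or>
     (\<exists>j. \<mu> * c j < 0 \<and> (\<forall>i. i \<noteq> j \<longrightarrow> \<mu> * c i > 0) \<and> (\<Sum>i\<in>UNIV. \<mu> * c i) < 0)"
proof -
  have dg: "\<mu> * (c i * (1 - c i)) > 0" for i using pos[of i] af[of i i] by (simp add: algebra_simps)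
  show ?thesis
  proof (cases "\<mu> > 0")
    case True
    have "c i > 0" for i
    proof (rule ccontr)
      assume "\<not> c i > 0"
      then have "c i < 0" using c0[of i] by simp
      then have "c i * (1 - c i) < 0" by (simp add: mult_neg_pos)
      then have "\<mu> * (c i * (1 - c i)) < 0" using True by (rule mult_pos_neg[rotated])
      then show False using dg[of i] by simp
    qed
    then show ?thesis using True by auto
  next
    case False
    then have mn: "\<mu> < 0" using mu0 by simp
    obtain j where j: "c j > 0"
    proof -
      have "\<not> (\<forall>i. c i \<le> 0)"
      proof
        assume "\<forall>i. c i \<le> 0"
        then have "(\<Sum>i\<in>UNIV. c i) \<le> 0" by (simp add: sum_nonpos)
        then show False using sc by simp
      qed
      then show ?thesis using that by (meson not_le)
    qed
    have oth: "c i < 0" if ij: "i \<noteq> j" for i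
    proof (rule ccontr)
      assume "\<not> c i < 0"
      then have ci: "c i > 0" using c0[of i] by simp
      define s where "s l = (if l = j then c i else if l = i then - c j else 0)" for l
      have sj: "s j = c i" and si: "s i = - c j" using ij by (auto simp: s_def)
      have "s j \<noteq> s i" using sj si ci j by simp
      then have qp: "Qf a s s > 0" by (rule Qpos)
      have s1: "(\<Sum>l\<in>UNIV. c l * s l) = 0"
        by (subst sum_two[of j i]) (use ij in \<open>auto simp: s_def\<close>)
      have s2: "(\<Sum>l\<in>UNIV. c l * s l * s l) = c j * c i * c i + c i * c j * c j"
        by (subst sum_two[of j i]) (use ij in \<open>auto simp: s_def\<close>)
      have "Qf a s s = \<mu> * (c i * c j * (c i + c j))"
        unfolding Qf_formula[OF af] s1 s2 by (simp add: algebra_simps)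
      also have "\<dots> < 0" using mn ci j by (intro mult_neg_pos) auto
      finally show False using qp by simp
    qed
    have "(\<Sum>i\<in>UNIV. \<mu> * c i) = \<mu>" using sc by (simp add: sum_distrib_left[symmetric])
    then have "\<mu> * c j < 0 \<and> (\<forall>i. i \<noteq> j \<longrightarrow> \<mu> * c i > 0) \<and> (\<Sum>i\<in>UNIV. \<mu> * c i) < 0"
      using mn j oth by (auto simp: mult_neg_pos mult_neg_neg)
    then show ?thesis by blast
  qed
qed

context slie begin

lemma Qpos:
  fixes M :: "'a^'m::finite \<Rightarrow> 'a^'m \<Rightarrow> real"
  assumes im: "inv_metric br M" and a: "\<And>i k x y. M (emb i x) (emb k y) = a i k * B x y"
    and ne: "s i \<noteq> s k"
  shows "Qf a s s > 0"
proof -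
  obtain x :: 'a where x: "x \<noteq> 0" using exists_nonzero by blast
  have nd: "(tens s x :: 'a^'m) \<notin> diag_sub"
  proof
    assume "(tens s x :: 'a^'m) \<in> diag_sub"
    then have "(tens s x :: 'a^'m) = diag (tens s x $ i)" using diag_sub_iff by blast
    then have "(tens s x :: 'a^'m) $ k = s i *\<^sub>R x" by simp
    then have "s k *\<^sub>R x = s i *\<^sub>R x" by simp
    then show False using ne x by (simp add: scaleR_cancel_right)
  qed
  have "M (tens s x) (tens s x) > 0" by (rule im_pos[OF im nd])
  then have "Qf a s s * B x x > 0" by (simp add: metric_tens[OF im a] Qf_def)
  then show ?thesis using B_pos[OF x] by (simp add: zero_less_mult_iff)
qed

lemma forward:
  fixes M :: "'a^'m::finite \<Rightarrow> 'a^'m \<Rightarrow> real"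
  assumes card: "CARD('m) \<ge> 2" and im: "inv_metric br M" and nr: "naturally_reductive br M"
  shows "\<exists>p ip. generated_by br M p ip \<and>
      ((\<exists>j. p = {X. X $ j = 0} \<and>
          (\<exists>\<beta>::'m \<Rightarrow> real. (\<forall>i. i \<noteq> j \<longrightarrow> \<beta> i > 0) \<and>
             (\<forall>X\<in>p. \<forall>Y\<in>p. ip X Y = (\<Sum>i\<in>UNIV - {j}. \<beta> i * negkill_i br i X Y))))
       \<or>
       (\<exists>\<alpha>::'m \<Rightarrow> real. (\<forall>i. \<alpha> i \<noteq> 0) \<and>
          p = {X. \<forall>Y\<in>diag_sub. (\<Sum>i\<in>UNIV. \<alpha> i * negkill_i br i X Y) = 0} \<and>
          (\<forall>X\<in>p. \<forall>Y\<in>p. ip X Y = (\<Sum>i\<in>UNIV. \<alpha> i * negkill_i br i X Y)) \<and>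
          ((\<forall>i. \<alpha> i > 0) \<or>
           (\<exists>j. \<alpha> j < 0 \<and> (\<forall>i. i \<noteq> j \<longrightarrow> \<alpha> i > 0) \<and> (\<Sum>i\<in>UNIV. \<alpha> i) < 0))))"
proof -
  obtain p ip where gen: "generated_by br M p ip"
    and nrc: "\<And>X Y. X \<in> p \<Longrightarrow> Y \<in> p \<Longrightarrow> ip (pcomp p (prod_br br X Y)) X = 0"
    using nr unfolding naturally_reductive_def by blast
  have rc: "reductive_compl br p" using gen by (simp add: generated_by_def)
  have nrM: "M (prod_br br X Y) X = 0" if "X \<in> p" "Y \<in> p" for X Y
  proof -
    have "M (prod_br br X Y) X = ip (pcomp p (prod_br br X Y)) (pcomp p X)"
      using gen by (simp add: generated_by_def)
    also have "\<dots> = ip (pcomp p (prod_br br X Y)) X" using rc_in_p[OF rc that(1)] by simp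
    also have "\<dots> = 0" using nrc[OF that] .
    finally show ?thesis .
  qed
  obtain a where a: "\<And>i k x y. M (emb i x) (emb k y) = a i k * B x y"
    using metric_coeffs[OF im] by blast
  have sym: "\<And>i k. a i k = a k i" using coeff_sym[OF im a] by blast
  have rows: "\<And>i. (\<Sum>k\<in>UNIV. a i k) = 0" using coeff_row[OF im a] by blast
  have pos: "\<And>i. a i i > 0" using coeff_pos[OF im a card] by blast
  obtain c where pc: "\<And>V. pcomp p V = V - diag (\<Sum>i\<in>UNIV. c i *\<^sub>R V $ i)"
    and sc: "(\<Sum>i\<in>UNIV. c i) = 1"
    using compl_coeffs[OF rc] by blast
  have E2: "(1 - c p') * a p' q + c q * a p' p' = 0" if "p' \<noteq> q" for p' q
    by (rule E2_alg[OF sym rows that NR_Q[OF im a rc pc nrM]])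
  have Mexp: "M X Y = (\<Sum>i\<in>UNIV. \<Sum>k\<in>UNIV. a i k * B (X$i) (Y$k))" for X Y
    by (rule metric_expand[OF im a])
  show ?thesis
  proof (cases "\<exists>j. c j = 1")
    case True
    then obtain j where cj: "c j = 1" by blast
    have cq0: "c q = 0" if "q \<noteq> j" for q
      using E2[of j q] that cj pos[of j] by (auto simp: eq_commute[of j])
    have a0: "a p' q = 0" if "p' \<noteq> q" "p' \<noteq> j" "q \<noteq> j" for p' q
      using E2[OF that(1)] cq0[OF that(2)] cq0[OF that(3)] by simp
    define P where "P = {X::'a^'m. X $ j = 0}"
    have genP: "generated_by br M P M" unfolding P_def by (rule generated_self[OF im rc_axis])
    have form: "M X Y = (\<Sum>i\<in>UNIV - {j}. a i i * negkill_i br i X Y)" if "X \<in> P" "Y \<in> P" for X Y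
    proof -
      have Xj: "X $ j = 0" and Yj: "Y $ j = 0" using that by (auto simp: P_def)
      have inner: "(\<Sum>k\<in>UNIV. a i k * B (X$i) (Y$k)) = a i i * B (X$i) (Y$i)" for i
      proof (rule sum_single)
        fix k assume ki: "k \<noteq> i"
        show "a i k * B (X$i) (Y$k) = 0"
        proof (cases "k = j")
          case True then show ?thesis using Yj by simp
        next
          case False
          show ?thesis
          proof (cases "i = j")
            case True then show ?thesis using Xj by simp
          next
            case False
            then show ?thesis using a0[of i k] ki \<open>k \<noteq> j\<close> by simp
          qed
        qed
      qed
      have "M X Y = (\<Sum>i\<in>UNIV. a i i * B (X$i) (Y$i))" unfolding Mexp inner ..
      also have "\<dots> = a j j * B (X$j) (Y$j) + (\<Sum>i\<in>UNIV - {j}. a i i * B (X$i) (Y$i))"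
        by (simp add: sum.remove[of UNIV j])
      also have "\<dots> = (\<Sum>i\<in>UNIV - {j}. a i i * negkill_i br i X Y)"
        using Xj by (simp add: negkill_i_B)
      finally show ?thesis .
    qed
    show ?thesis
      apply (rule exI[of _ P], rule exI[of _ M])
      apply (intro conjI genP disjI1 exI[of _ j])
      apply (simp add: P_def)
      apply (rule exI[of _ "\<lambda>i. a i i"])
      using pos form by auto
  next
    case False
    then have n1: "\<And>j. c j \<noteq> 1" by blast
    obtain \<mu> where mu0: "\<mu> \<noteq> 0" and c0: "\<And>i. c i \<noteq> 0"
      and af: "\<And>i k. a i k = \<mu> * ((if i = k then c i else 0) - c i * c k)"
      using caseB_alg[OF sym pos E2 sc n1] by blast
    have sg: "(\<forall>i. \<mu> * c i > 0) \<or>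
     (\<exists>j. \<mu> * c j < 0 \<and> (\<forall>i. i \<noteq> j \<longrightarrow> \<mu> * c i > 0) \<and> (\<Sum>i\<in>UNIV. \<mu> * c i) < 0)"
      by (rule signs_alg[OF af mu0 c0 sc pos]) (rule Qpos[OF im a])
    define \<alpha> where "\<alpha> i = \<mu> * c i" for i
    define P where "P = {X::'a^'m. \<forall>Y\<in>diag_sub. (\<Sum>i\<in>UNIV. \<alpha> i * negkill_i br i X Y) = 0}"
    have Peq: "P = {X. (\<Sum>i\<in>UNIV. \<alpha> i *\<^sub>R X $ i) = 0}" unfolding P_def by (rule p_alpha_eq)
    have S: "(\<Sum>i\<in>UNIV. \<alpha> i) \<noteq> 0" using sc mu0 by (simp add: \<alpha>_def sum_distrib_left[symmetric])
    have genP: "generated_by br M P M" unfolding Peq by (rule generated_self[OF im rc_alpha[OF S]])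
    have form: "M X Y = (\<Sum>i\<in>UNIV. \<alpha> i * negkill_i br i X Y)" if "X \<in> P" "Y \<in> P" for X Y
    proof -
      have "(\<Sum>i\<in>UNIV. \<alpha> i *\<^sub>R X $ i) = 0" using that Peq by blast
      then have "\<mu> *\<^sub>R (\<Sum>i\<in>UNIV. c i *\<^sub>R X $ i) = 0"
        by (simp add: \<alpha>_def scaleR_sum_right)
      then have cx: "(\<Sum>i\<in>UNIV. c i *\<^sub>R X $ i) = 0" using mu0 by simp
      have d1: "(\<Sum>k\<in>UNIV. (if i = k then c i else 0) * B (X$i) (Y$k)) = c i * B (X$i) (Y$i)" for i
        by (subst sum_single[of i]) auto
      have "B (\<Sum>i\<in>UNIV. c i *\<^sub>R X $ i) (\<Sum>k\<in>UNIV. c k *\<^sub>R Y $ k)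
          = (\<Sum>i\<in>UNIV. B (c i *\<^sub>R X $ i) (\<Sum>k\<in>UNIV. c k *\<^sub>R Y $ k))"
        by (rule B_sum_l)
      also have "\<dots> = (\<Sum>i\<in>UNIV. \<Sum>k\<in>UNIV. B (c i *\<^sub>R X $ i) (c k *\<^sub>R Y $ k))"
        by (rule sum.cong[OF refl], rule B_sum_r)
      also have "\<dots> = (\<Sum>i\<in>UNIV. \<Sum>k\<in>UNIV. c i * c k * B (X$i) (Y$k))"
        by (intro sum.cong refl) (simp add: B_scale_l B_scale_r)
      finally have "(\<Sum>i\<in>UNIV. \<Sum>k\<in>UNIV. c i * c k * B (X$i) (Y$k))
          = B (\<Sum>i\<in>UNIV. c i *\<^sub>R X $ i) (\<Sum>k\<in>UNIV. c k *\<^sub>R Y $ k)" by simp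
      also have "\<dots> = 0" using cx by simp
      finally have z: "(\<Sum>i\<in>UNIV. \<Sum>k\<in>UNIV. c i * c k * B (X$i) (Y$k)) = 0" .
      have "M X Y = (\<Sum>i\<in>UNIV. \<Sum>k\<in>UNIV. \<mu> * ((if i = k then c i else 0) * B (X$i) (Y$k)) - \<mu> * (c i * c k * B (X$i) (Y$k)))"
        unfolding Mexp af by (intro sum.cong refl) (simp add: algebra_simps)
      also have "\<dots> = \<mu> * (\<Sum>i\<in>UNIV. \<Sum>k\<in>UNIV. (if i = k then c i else 0) * B (X$i) (Y$k))
          - \<mu> * (\<Sum>i\<in>UNIV. \<Sum>k\<in>UNIV. c i * c k * B (X$i) (Y$k))"
        by (simp add: sum_subtractf sum_distrib_left)
      also have "\<dots> = (\<Sum>i\<in>UNIV. \<alpha> i * negkill_i br i X Y)"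
        unfolding z d1 by (simp add: \<alpha>_def negkill_i_B sum_distrib_left mult.assoc)
      finally show ?thesis .
    qed
    have an: "\<forall>i. \<alpha> i \<noteq> 0" using mu0 c0 by (simp add: \<alpha>_def)
    show ?thesis
      apply (rule exI[of _ P], rule exI[of _ M])
      apply (rule conjI[OF genP])
      apply (rule disjI2)
      apply (rule exI[of _ \<alpha>])
      apply (intro conjI)
      subgoal using an by blast
      subgoal by (simp add: P_def)
      subgoal using form by blast
      subgoal using sg by (simp add: \<alpha>_def)
      done
  qed
qed

lemma backward:
  fixes M :: "'a^'m::finite \<Rightarrow> 'a^'m \<Rightarrow> real"
  assumes im: "inv_metric br M"
    and h: "\<exists>p ip. generated_by br M p ip \<and>
      ((\<exists>j. p = {X. X $ j = 0} \<and>
          (\<exists>\<beta>::'m \<Rightarrow> real. (\<forall>i. i \<noteq> j \<longrightarrow> \<beta> i > 0) \<and>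
             (\<forall>X\<in>p. \<forall>Y\<in>p. ip X Y = (\<Sum>i\<in>UNIV - {j}. \<beta> i * negkill_i br i X Y))))
       \<or>
       (\<exists>\<alpha>::'m \<Rightarrow> real. (\<forall>i. \<alpha> i \<noteq> 0) \<and>
          p = {X. \<forall>Y\<in>diag_sub. (\<Sum>i\<in>UNIV. \<alpha> i * negkill_i br i X Y) = 0} \<and>
          (\<forall>X\<in>p. \<forall>Y\<in>p. ip X Y = (\<Sum>i\<in>UNIV. \<alpha> i * negkill_i br i X Y)) \<and>
          ((\<forall>i. \<alpha> i > 0) \<or>
           (\<exists>j. \<alpha> j < 0 \<and> (\<forall>i. i \<noteq> j \<longrightarrow> \<alpha> i > 0) \<and> (\<Sum>i\<in>UNIV. \<alpha> i) < 0))))"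
  shows "naturally_reductive br M"
proof -
  obtain p ip where gen: "generated_by br M p ip" and cs: "(\<exists>j. p = {X. X $ j = 0} \<and>
          (\<exists>\<beta>::'m \<Rightarrow> real. (\<forall>i. i \<noteq> j \<longrightarrow> \<beta> i > 0) \<and>
             (\<forall>X\<in>p. \<forall>Y\<in>p. ip X Y = (\<Sum>i\<in>UNIV - {j}. \<beta> i * negkill_i br i X Y))))
       \<or>
       (\<exists>\<alpha>::'m \<Rightarrow> real. (\<forall>i. \<alpha> i \<noteq> 0) \<and>
          p = {X. \<forall>Y\<in>diag_sub. (\<Sum>i\<in>UNIV. \<alpha> i * negkill_i br i X Y) = 0} \<and>
          (\<forall>X\<in>p. \<forall>Y\<in>p. ip X Y = (\<Sum>i\<in>UNIV. \<alpha> i * negkill_i br i X Y)))"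
    using h by blast
  have rc: "reductive_compl br p" using gen by (simp add: generated_by_def)
  have "ip (pcomp p (prod_br br X Y)) X = 0" if X: "X \<in> p" and Y: "Y \<in> p" for X Y
    using cs
  proof
    assume "\<exists>j. p = {X. X $ j = 0} \<and>
          (\<exists>\<beta>::'m \<Rightarrow> real. (\<forall>i. i \<noteq> j \<longrightarrow> \<beta> i > 0) \<and>
             (\<forall>X\<in>p. \<forall>Y\<in>p. ip X Y = (\<Sum>i\<in>UNIV - {j}. \<beta> i * negkill_i br i X Y)))"
    then obtain j \<beta> where pj: "p = {X. X $ j = 0}"
      and f: "\<And>X Y. X \<in> p \<Longrightarrow> Y \<in> p \<Longrightarrow> ip X Y = (\<Sum>i\<in>UNIV - {j}. \<beta> i * negkill_i br i X Y)"
      by blast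
    have XY: "prod_br br X Y \<in> p" using X Y pj by simp
    have "ip (pcomp p (prod_br br X Y)) X = ip (prod_br br X Y) X" using rc_in_p[OF rc XY] by simp
    also have "\<dots> = (\<Sum>i\<in>UNIV - {j}. \<beta> i * B (br (X$i) (Y$i)) (X$i))"
      using f[OF XY X] by (simp add: negkill_i_B)
    also have "\<dots> = 0" by (simp add: B_alt3)
    finally show ?thesis .
  next
    assume "\<exists>\<alpha>::'m \<Rightarrow> real. (\<forall>i. \<alpha> i \<noteq> 0) \<and>
          p = {X. \<forall>Y\<in>diag_sub. (\<Sum>i\<in>UNIV. \<alpha> i * negkill_i br i X Y) = 0} \<and>
          (\<forall>X\<in>p. \<forall>Y\<in>p. ip X Y = (\<Sum>i\<in>UNIV. \<alpha> i * negkill_i br i X Y))"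
    then obtain \<alpha> where pa: "p = {X. \<forall>Y\<in>diag_sub. (\<Sum>i\<in>UNIV. \<alpha> i * negkill_i br i X Y) = 0}"
      and f: "\<And>X Y. X \<in> p \<Longrightarrow> Y \<in> p \<Longrightarrow> ip X Y = (\<Sum>i\<in>UNIV. \<alpha> i * negkill_i br i X Y)"
      by blast
    define Z where "Z = pcomp p (prod_br br X Y)"
    have Zp: "Z \<in> p" and Zd: "prod_br br X Y - Z \<in> diag_sub" using rc_decomp[OF rc] by (auto simp: Z_def)
    obtain d where d: "prod_br br X Y - Z = diag d" using Zd diag_sub_ex by blast
    have Zi: "Z $ i = br (X$i) (Y$i) - d" for i
    proof -
      have e: "Z = prod_br br X Y - (prod_br br X Y - Z)" by simp
      have Zeq: "Z = prod_br br X Y - diag d" using e unfolding d .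
      show ?thesis by (subst Zeq) simp
    qed
    have Xm: "\<forall>Y\<in>diag_sub. (\<Sum>i\<in>UNIV. \<alpha> i * negkill_i br i X Y) = 0" using X unfolding pa by simp
    have Xd: "(\<Sum>i\<in>UNIV. \<alpha> i * negkill_i br i X (diag d)) = 0" using Xm diag_in[of d] by blast
    have "ip Z X = (\<Sum>i\<in>UNIV. \<alpha> i * B (Z$i) (X$i))" using f[OF Zp X] by (simp add: negkill_i_B)
    also have "\<dots> = (\<Sum>i\<in>UNIV. \<alpha> i * B (br (X$i) (Y$i)) (X$i)) - (\<Sum>i\<in>UNIV. \<alpha> i * B d (X$i))"
    proof -
      have "\<alpha> i * B (Z$i) (X$i) = \<alpha> i * B (br (X$i) (Y$i)) (X$i) - \<alpha> i * B d (X$i)" for i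
        by (simp add: Zi B_diff_l right_diff_distrib)
      then show ?thesis by (simp add: sum_subtractf)
    qed
    also have "\<dots> = - (\<Sum>i\<in>UNIV. \<alpha> i * negkill_i br i X (diag d))"
      by (simp add: B_alt3 negkill_i_B B_sym[of d])
    also have "\<dots> = 0" using Xd by simp
    finally show ?thesis by (simp add: Z_def)
  qed
  then show ?thesis unfolding naturally_reductive_def
    by (intro exI[of _ p] exI[of _ ip] conjI gen) blast
qed

end

theorem theorem1:
  fixes br :: "'f::euclidean_space \<Rightarrow> 'f \<Rightarrow> 'f"
    and M :: "'f^'m::finite \<Rightarrow> 'f^'m \<Rightarrow> real"
  assumes "simple_lie_algebra br" and "compact_lie_algebra br"
    and "CARD('m) \<ge> 2"
    and "inv_metric br M"
  shows "naturally_reductive br M \<longleftrightarrow>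
    (\<exists>p ip. generated_by br M p ip \<and>
      ((\<exists>j. p = {X. X $ j = 0} \<and>
          (\<exists>\<beta>::'m \<Rightarrow> real. (\<forall>i. i \<noteq> j \<longrightarrow> \<beta> i > 0) \<and>
             (\<forall>X\<in>p. \<forall>Y\<in>p. ip X Y = (\<Sum>i\<in>UNIV - {j}. \<beta> i * negkill_i br i X Y))))
       \<or>
       (\<exists>\<alpha>::'m \<Rightarrow> real. (\<forall>i. \<alpha> i \<noteq> 0) \<and>
          p = {X. \<forall>Y\<in>diag_sub. (\<Sum>i\<in>UNIV. \<alpha> i * negkill_i br i X Y) = 0} \<and>
          (\<forall>X\<in>p. \<forall>Y\<in>p. ip X Y = (\<Sum>i\<in>UNIV. \<alpha> i * negkill_i br i X Y)) \<and>
          ((\<forall>i. \<alpha> i > 0) \<or>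
           (\<exists>j. \<alpha> j < 0 \<and> (\<forall>i. i \<noteq> j \<longrightarrow> \<alpha> i > 0) \<and> (\<Sum>i\<in>UNIV. \<alpha> i) < 0)))))"
proof -
  interpret slie br
    by unfold_locales (use assms(1,2) in \<open>auto simp: compact_lie_algebra_def\<close>)
  show ?thesis
    using forward[OF assms(3,4)] backward[OF assms(4)] by blast
qed

end
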